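(* Consider the expectation problem (EX). Suppose Assumption B holds, $x^*$ is a minimizer of $\phi$ with $\phi^*=\phi(x^* )$, $g_k$ satisfies Condition C in (EX), and $\mathbb E_k[g_k]=\nabla f(y_k)$ for all $k$. (1) Option I: if $\tilde\eta_k=\tilde\eta\in[0,1)$, $\tilde\iota_0^2\in[0,1-\tilde\eta)$, $\sum_{k}\tilde\delta_k^2<\infty$, and $\alpha_k=\alpha\le\frac{1-\tilde\eta-\tilde\iota_0^2}{L}$, then there is $C<\infty$ with $\min_{k=0,\dots,K-1}\mathbb E[\phi(x_k)-\phi^*]\le C/K$ for all $K\ge1$. (2) Option II with the convex acceleration sequences: if $\tilde\eta_k=\tilde\eta\in[0,1)$, $\tilde\iota_0^2\in[0,1-\tilde\eta)$, $\sum_k\tilde\delta_k^2/\theta_{k+1}^2<\infty$, and $\alpha_k=\alpha\le\frac{1-\tilde\eta-\tilde\iota_0^2}{L}$, then there is $C<\infty$ with $\mathbb E[\phi(x_K)-\phi^*]\le C/K^2$ for all $K\ge1$.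
   Context: Problem: minimize $\phi(x)=f(x)+h(x)$ over $x\in\mathbb{R}^d$. Assumption B: $f:\mathbb{R}^d\to\mathbb{R}$ is convex and continuously differentiable with $L$-Lipschitz continuous gradient ($L>0$), and $h:\mathbb{R}^d\to\mathbb{R}\cup\{+\infty\}$ is closed, convex and proper. Expectation problem (EX): $f(x)=\mathbb E_{\xi\sim\mathcal P}[F(x,\xi)]$. For $\alpha>0$, $\mathrm{prox}_{\alpha,h}(y)=\arg\min_{x\in\mathbb{R}^d}\{h(x)+\frac{1}{2\alpha}\|x-y\|^2\}$. Algorithm: given $x_0\in\mathbb{R}^d$, $y_0=x_0$, step sizes $\alpha_k>0$ and parameters $\beta_k$, for $k=0,1,2,\dots$: compute an estimate $g_k$ of $\nabla f(y_k)$; set $x_{k+1}=\mathrm{prox}_{\alpha_k,h}(y_k-\alpha_kg_k)$; under Option I set $y_{k+1}=x_{k+1}$, under Option II set $y_{k+1}=x_{k+1}+\beta_{k+1}(x_{k+1}-x_k)$. Define $R_{\alpha_k}(y_k)=\frac{1}{\alpha_k}(y_k-x_{k+1})$. Let $\mathcal G_k$ be the $\sigma$-algebra generated by $x_0,g_0,\dots,g_{k-1}$, $\mathbb E_k[\cdot]=\mathbb E[\cdot\mid\mathcal G_k]$, and $\mathbb E[\cdot]$ is total expectation. Condition C in (EX): for all $k\ge0$, $\mathbb E_k[\|g_k-\nabla f(y_k)\|^2]\le\frac{\tilde\eta_k^2}{4}\|\mathbb E_k[R_{\alpha_k}(y_k)]\|^2+\tilde\iota_0^2\tilde\delta_k^2$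 with $\tilde\eta_k\in[0,1)$, $\tilde\iota_0\ge0$, $\tilde\delta_k\ge0$. Convex acceleration sequences: $\beta_k=\frac{k-1}{k+2}$ for $k\ge1$, $\theta_k=\frac{2}{k+1}$ for $k\ge0$, $v_0=x_0$ and $v_k=x_{k-1}+\frac{1}{\theta_k}(x_k-x_{k-1})$ for $k\ge1$. *)

theory Defs
  imports "HOL-Analysis.Analysis" "HOL-Probability.Probability"
begin

text \<open>h is an extended-real-valued closed convex proper function, encoded by its
  effective domain D (nonempty) and its finite values on D; h = +infinity outside D.\<close>

definition closed_convex_proper :: "('a::euclidean_space \<Rightarrow> real) \<Rightarrow> 'a set \<Rightarrow> bool" where
  "closed_convex_proper h D \<longleftrightarrow> D \<noteq> {} \<and> convex D \<and> convex_on D h \<and>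
     closed {(x, t). x \<in> D \<and> h x \<le> t}"

definition prox :: "real \<Rightarrow> ('a::euclidean_space \<Rightarrow> real) \<Rightarrow> 'a set \<Rightarrow> 'a \<Rightarrow> 'a" where
  "prox a h D y = (SOME z. z \<in> D \<and>
     (\<forall>x\<in>D. h z + (norm (z - y))\<^sup>2 / (2 * a) \<le> h x + (norm (x - y))\<^sup>2 / (2 * a)))"

text \<open>Iterates (x_k, y_k) of the algorithm along one sample path G k = g_k(omega).
  Option I: beta = (\<lambda>_. 0) (then y_{k+1} = x_{k+1}); Option II: general beta.\<close>
primrec apg_xy :: "('a::euclidean_space \<Rightarrow> real) \<Rightarrow> 'a set \<Rightarrow> (nat \<Rightarrow> real) \<Rightarrow> (nat \<Rightarrow> real)
    \<Rightarrow> 'a \<Rightarrow> (nat \<Rightarrow> 'a) \<Rightarrow> nat \<Rightarrow> 'a \<times> 'a" where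
  "apg_xy h D a b x0 G 0 = (x0, x0)"
| "apg_xy h D a b x0 G (Suc k) =
     (let xk = fst (apg_xy h D a b x0 G k); yk = snd (apg_xy h D a b x0 G k);
          xn = prox (a k) h D (yk - a k *\<^sub>R G k)
      in (xn, xn + b (Suc k) *\<^sub>R (xn - xk)))"

definition xit :: "('a::euclidean_space \<Rightarrow> real) \<Rightarrow> 'a set \<Rightarrow> (nat \<Rightarrow> real) \<Rightarrow> (nat \<Rightarrow> real)
    \<Rightarrow> 'a \<Rightarrow> (nat \<Rightarrow> 'w \<Rightarrow> 'a) \<Rightarrow> nat \<Rightarrow> 'w \<Rightarrow> 'a" where
  "xit h D a b x0 g k \<omega> = fst (apg_xy h D a b x0 (\<lambda>i. g i \<omega>) k)"

definition yit :: "('a::euclidean_space \<Rightarrow> real) \<Rightarrow> 'a set \<Rightarrow> (nat \<Rightarrow> real) \<Rightarrow> (nat \<Rightarrow> real)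
    \<Rightarrow> 'a \<Rightarrow> (nat \<Rightarrow> 'w \<Rightarrow> 'a) \<Rightarrow> nat \<Rightarrow> 'w \<Rightarrow> 'a" where
  "yit h D a b x0 g k \<omega> = snd (apg_xy h D a b x0 (\<lambda>i. g i \<omega>) k)"

definition Rit :: "('a::euclidean_space \<Rightarrow> real) \<Rightarrow> 'a set \<Rightarrow> (nat \<Rightarrow> real) \<Rightarrow> (nat \<Rightarrow> real)
    \<Rightarrow> 'a \<Rightarrow> (nat \<Rightarrow> 'w \<Rightarrow> 'a) \<Rightarrow> nat \<Rightarrow> 'w \<Rightarrow> 'a" where
  "Rit h D a b x0 g k \<omega> = (1 / a k) *\<^sub>R (yit h D a b x0 g k \<omega> - xit h D a b x0 g (Suc k) \<omega>)"

text \<open>G_k: sigma-algebra generated by x_0 (deterministic) and g_0, ..., g_{k-1}.\<close>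
definition Filt :: "'w measure \<Rightarrow> (nat \<Rightarrow> 'w \<Rightarrow> 'a::euclidean_space) \<Rightarrow> nat \<Rightarrow> 'w measure" where
  "Filt M g k = sigma (space M) (\<Union>i<k. {g i -` A \<inter> space M | A. A \<in> sets borel})"

definition unbiased :: "'w measure \<Rightarrow> ('a::euclidean_space \<Rightarrow> 'a) \<Rightarrow> ('a \<Rightarrow> real) \<Rightarrow> 'a set
    \<Rightarrow> (nat \<Rightarrow> real) \<Rightarrow> (nat \<Rightarrow> real) \<Rightarrow> 'a \<Rightarrow> (nat \<Rightarrow> 'w \<Rightarrow> 'a) \<Rightarrow> bool" where
  "unbiased M gradf h D a b x0 g \<longleftrightarrow> (\<forall>k. \<forall>e\<in>Basis. AE \<omega> in M.
     real_cond_exp M (Filt M g k) (\<lambda>\<omega>. g k \<omega> \<bullet> e) \<omega> = gradf (yit h D a b x0 g k \<omega>) \<bullet> e)"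

text \<open>Condition C: E_k ||g_k - grad f(y_k)||^2 \<le> eta_k^2/4 ||E_k R(y_k)||^2 + iota0^2 delta_k^2.
  ||E_k R||^2 is written as the sum of squares of its coordinates.\<close>
definition condC :: "'w measure \<Rightarrow> ('a::euclidean_space \<Rightarrow> 'a) \<Rightarrow> ('a \<Rightarrow> real) \<Rightarrow> 'a set
    \<Rightarrow> (nat \<Rightarrow> real) \<Rightarrow> (nat \<Rightarrow> real) \<Rightarrow> 'a \<Rightarrow> (nat \<Rightarrow> 'w \<Rightarrow> 'a)
    \<Rightarrow> (nat \<Rightarrow> real) \<Rightarrow> real \<Rightarrow> (nat \<Rightarrow> real) \<Rightarrow> bool" where
  "condC M gradf h D a b x0 g eta iota0 delta \<longleftrightarrow> (\<forall>k. AE \<omega> in M.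
     nn_cond_exp M (Filt M g k)
        (\<lambda>\<omega>. ennreal ((norm (g k \<omega> - gradf (yit h D a b x0 g k \<omega>)))\<^sup>2)) \<omega>
     \<le> ennreal ((eta k)\<^sup>2 / 4 *
          (\<Sum>e\<in>Basis. (real_cond_exp M (Filt M g k) (\<lambda>\<omega>. Rit h D a b x0 g k \<omega> \<bullet> e) \<omega>)\<^sup>2)
        + iota0\<^sup>2 * (delta k)\<^sup>2))"

definition beta_acc :: "nat \<Rightarrow> real" where
  "beta_acc k = (real k - 1) / (real k + 2)"

definition theta_acc :: "nat \<Rightarrow> real" where
  "theta_acc k = 2 / (real k + 1)"

end

theory Submission
  imports Defs
begin


lemma descent_lemma:
  fixes f :: "'a::euclidean_space \<Rightarrow> real"
  assumes fg: "\<And>x. (f has_derivative (\<lambda>v. gradf x \<bullet> v)) (at x)"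
    and lip: "\<And>x y. norm (gradf x - gradf y) \<le> L * norm (x - y)"
  shows "f y \<le> f x + gradf x \<bullet> (y - x) + L / 2 * (norm (y - x))\<^sup>2"
proof -
  define d where "d = y - x"
  define \<psi> where "\<psi> t = f (x + t *\<^sub>R d) - t * (gradf x \<bullet> d) - L / 2 * t\<^sup>2 * (norm d)\<^sup>2" for t
  have "\<psi> 0 \<ge> \<psi> 1"
  proof (rule DERIV_nonpos_imp_nonincreasing[of 0 1 \<psi>])
    fix t :: real assume t: "0 \<le> t" "t \<le> 1"
    have d1: "((\<lambda>t. x + t *\<^sub>R d) has_derivative (\<lambda>s. s *\<^sub>R d)) (at t)"
      by (auto intro!: derivative_eq_intros)
    have d2: "((\<lambda>t. f (x + t *\<^sub>R d)) has_derivative (\<lambda>s. gradf (x + t *\<^sub>R d) \<bullet> (s *\<^sub>R d))) (at t)"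
      using has_derivative_compose[OF d1 fg] by simp
    have d3: "((\<lambda>t. f (x + t *\<^sub>R d)) has_real_derivative (gradf (x + t *\<^sub>R d) \<bullet> d)) (at t)"
      unfolding has_field_derivative_def using d2 by (simp add: mult.commute[of _ "gradf _ \<bullet> d"] mult_commute_abs)
    have "(\<psi> has_real_derivative (gradf (x + t *\<^sub>R d) \<bullet> d - gradf x \<bullet> d - L / 2 * (2 * t) * (norm d)\<^sup>2)) (at t)"
      unfolding \<psi>_def by (auto intro!: derivative_eq_intros d3)
    moreover have "gradf (x + t *\<^sub>R d) \<bullet> d - gradf x \<bullet> d - L / 2 * (2 * t) * (norm d)\<^sup>2 \<le> 0"
    proof -
      have "gradf (x + t *\<^sub>R d) \<bullet> d - gradf x \<bullet> d = (gradf (x + t *\<^sub>R d) - gradf x) \<bullet> d"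
        by (simp add: inner_diff_left)
      also have "\<dots> \<le> norm (gradf (x + t *\<^sub>R d) - gradf x) * norm d"
        by (rule norm_cauchy_schwarz)
      also have "\<dots> \<le> L * norm (t *\<^sub>R d) * norm d"
        using lip[of "x + t *\<^sub>R d" x] by (simp add: mult_right_mono)
      also have "\<dots> = L / 2 * (2 * t) * (norm d)\<^sup>2" using t by (simp add: power2_eq_square)
      finally show ?thesis by simp
    qed
    ultimately show "\<exists>z. DERIV \<psi> t :> z \<and> z \<le> 0" by blast
  qed simp
  then show ?thesis unfolding \<psi>_def d_def by (simp add: algebra_simps)
qed

lemma convex_tangent:
  fixes f :: "'a::euclidean_space \<Rightarrow> real"
  assumes cvx: "convex_on UNIV f"
    and fg: "\<And>x. (f has_derivative (\<lambda>v. gradf x \<bullet> v)) (at x)"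
  shows "f u \<ge> f y + gradf y \<bullet> (u - y)"
proof -
  define d where "d = u - y"
  define \<phi> where "\<phi> t = f (y + t *\<^sub>R d)" for t
  have c: "convex_on UNIV \<phi>"
  proof (rule convex_onI)
    fix t a b :: real assume t: "0 < t" "t < 1"
    have "y + ((1 - t) *\<^sub>R a + t *\<^sub>R b) *\<^sub>R d = (1 - t) *\<^sub>R (y + a *\<^sub>R d) + t *\<^sub>R (y + b *\<^sub>R d)"
      by (simp add: algebra_simps)
    then show "\<phi> ((1 - t) *\<^sub>R a + t *\<^sub>R b) \<le> (1 - t) * \<phi> a + t * \<phi> b"
      unfolding \<phi>_def using convex_onD[OF cvx, of t] t by simp
  qed simp
  have d1: "((\<lambda>t. y + t *\<^sub>R d) has_derivative (\<lambda>s. s *\<^sub>R d)) (at 0)"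
    by (auto intro!: derivative_eq_intros)
  have d2: "(\<phi> has_derivative (\<lambda>s. gradf (y + 0 *\<^sub>R d) \<bullet> (s *\<^sub>R d))) (at 0)"
    unfolding \<phi>_def using has_derivative_compose[OF d1 fg] by simp
  have d3: "(\<phi> has_field_derivative (gradf y \<bullet> d)) (at 0 within UNIV)"
    unfolding has_field_derivative_def using d2 by (simp add: mult.commute[of _ "gradf _ \<bullet> d"] mult_commute_abs)
  have "\<phi> 1 - \<phi> 0 \<ge> (gradf y \<bullet> d) * (1 - 0)"
    by (rule convex_on_imp_above_tangent[OF c _ _ _ d3]) auto
  then show ?thesis unfolding \<phi>_def d_def by simp
qed


locale prox_setting =
  fixes f :: "'a::euclidean_space \<Rightarrow> real" and gradf :: "'a \<Rightarrow> 'a" and L :: real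
    and h :: "'a \<Rightarrow> real" and D :: "'a set" and xstar :: 'a
  assumes fg: "\<And>x. (f has_derivative (\<lambda>v. gradf x \<bullet> v)) (at x)"
    and lip: "\<And>x y. norm (gradf x - gradf y) \<le> L * norm (x - y)"
    and L_pos: "L > 0"
    and ccp: "closed_convex_proper h D"
    and xs_dom: "xstar \<in> D"
    and xs_min: "\<And>x. x \<in> D \<Longrightarrow> f xstar + h xstar \<le> f x + h x"
begin

lemma D_convex: "convex D" and h_convex: "convex_on D h" and epi_closed: "closed {(x, t). x \<in> D \<and> h x \<le> t}"
  using ccp unfolding closed_convex_proper_def by auto

lemma descent: "f y \<le> f x + gradf x \<bullet> (y - x) + L / 2 * (norm (y - x))\<^sup>2"
  by (rule descent_lemma[OF fg lip])

lemma h_lower_aux: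
  assumes z: "z \<in> D"
  shows "h z \<ge> h xstar - (norm (gradf xstar) + L / 2) - (norm (gradf xstar) + L / 2) * norm (z - xstar)"
proof -
  define c where "c = norm (gradf xstar) + L / 2"
  have c0: "c \<ge> 0" unfolding c_def using L_pos by simp
  have near: "h w \<ge> h xstar - c" if w: "w \<in> D" "norm (w - xstar) \<le> 1" for w
  proof -
    have "f w \<le> f xstar + gradf xstar \<bullet> (w - xstar) + L / 2 * (norm (w - xstar))\<^sup>2"
      by (rule descent)
    also have "gradf xstar \<bullet> (w - xstar) \<le> norm (gradf xstar) * norm (w - xstar)"
      by (rule norm_cauchy_schwarz)
    also have "\<dots> \<le> norm (gradf xstar)" using w(2) by (simp add: mult_left_le)
    also have "L / 2 * (norm (w - xstar))\<^sup>2 \<le> L / 2"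
    proof -
      have "(norm (w - xstar))\<^sup>2 \<le> 1" using w(2) by (simp add: power_le_one)
      then show ?thesis using L_pos by (simp add: mult_left_le)
    qed
    finally have "f w \<le> f xstar + c" unfolding c_def by simp
    with xs_min[OF w(1)] show ?thesis by simp
  qed
  show ?thesis
  proof (cases "norm (z - xstar) \<le> 1")
    case True
    then show ?thesis using near[OF z True] c0 unfolding c_def[symmetric] by (smt (verit) mult_nonneg_nonneg norm_ge_zero)
  next
    case False
    define r where "r = norm (z - xstar)"
    have r1: "r > 1" using False r_def by simp
    define t where "t = 1 / r"
    have t: "0 < t" "t < 1" using r1 unfolding t_def by auto
    define w where "w = (1 - t) *\<^sub>R xstar + t *\<^sub>R z"
    have wD: "w \<in> D" unfolding w_def using D_convex xs_dom z t
      by (simp add: convex_alt)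
    have "w - xstar = t *\<^sub>R (z - xstar)" unfolding w_def by (simp add: algebra_simps)
    then have "norm (w - xstar) = 1" using r1 unfolding t_def r_def by (auto simp: divide_simps)
    then have hw: "h w \<ge> h xstar - c" using near[OF wD] by simp
    have "h w \<le> (1 - t) * h xstar + t * h z"
      unfolding w_def using convex_onD[OF h_convex, of t xstar z] t xs_dom z by simp
    with hw have "t * h z \<ge> t * h xstar - c" by (simp add: algebra_simps)
    then have "h z \<ge> h xstar - c / t" using t by (simp add: field_simps)
    moreover have "c / t = c * r" unfolding t_def using r1 by simp
    ultimately have "h z \<ge> h xstar - c * r" by simp
    then show ?thesis unfolding r_def c_def[symmetric] using c0 by simp
  qed
qed

lemma h_lower: obtains c0 c1 where "c1 \<ge> 0" "\<And>z. z \<in> D \<Longrightarrow> h z \<ge> c0 - c1 * norm (z - xstar)"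
proof -
  have "norm (gradf xstar) + L / 2 \<ge> 0" using L_pos by simp
  then show ?thesis using that[of "norm (gradf xstar) + L / 2" "h xstar - (norm (gradf xstar) + L / 2)"] h_lower_aux
    by simp
qed

lemma prox_exists:
  assumes a: "a > 0"
  shows "\<exists>p. p \<in> D \<and> (\<forall>x\<in>D. h p + (norm (p - y))\<^sup>2 / (2 * a) \<le> h x + (norm (x - y))\<^sup>2 / (2 * a))"
proof -
  obtain c0 c1 where c1: "c1 \<ge> 0" and hl: "\<And>z. z \<in> D \<Longrightarrow> h z \<ge> c0 - c1 * norm (z - xstar)"
    using h_lower by blast
  define Obj where "Obj z = h z + (norm (z - y))\<^sup>2 / (2 * a)" for z
  define K0 where "K0 = c0 - c1 * norm (y - xstar) - a * c1\<^sup>2"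
  have lowb: "Obj z \<ge> K0 + (norm (z - y))\<^sup>2 / (4 * a)" if z: "z \<in> D" for z
  proof -
    define s where "s = norm (z - y)"
    have "norm (z - xstar) \<le> s + norm (y - xstar)"
      unfolding s_def by (rule norm_diff_triangle_le[of z y _ xstar]) simp_all
    then have "c1 * norm (z - xstar) \<le> c1 * s + c1 * norm (y - xstar)"
      using mult_left_mono[OF _ c1] by (metis distrib_left)
    moreover have "c1 * s \<le> s\<^sup>2 / (4 * a) + a * c1\<^sup>2"
    proof -
      have "0 \<le> (s - 2 * a * c1)\<^sup>2 / (4 * a)" using a by simp
      also have "\<dots> = s\<^sup>2 / (4 * a) + a * c1\<^sup>2 - c1 * s" using a
        by (simp add: power2_eq_square field_simps)
      finally show ?thesis by simp
    qed
    moreover have "(norm (z - y))\<^sup>2 / (2 * a) = s\<^sup>2 / (4 * a) + s\<^sup>2 / (4 * a)"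
      unfolding s_def using a by (simp add: field_simps)
    moreover have "h z \<ge> c0 - c1 * norm (z - xstar)" by (rule hl[OF z])
    ultimately show ?thesis unfolding Obj_def K0_def s_def by linarith
  qed
  have bdd: "bdd_below (Obj ` D)"
  proof
    fix v assume "v \<in> Obj ` D"
    then obtain z where "z \<in> D" "v = Obj z" by auto
    moreover have "0 \<le> (norm (z - y))\<^sup>2 / (4 * a)" using a by simp
    ultimately show "K0 \<le> v" using lowb[of z] by linarith
  qed
  define m where "m = Inf (Obj ` D)"
  have Dne: "D \<noteq> {}" using xs_dom by auto
  have mle: "m \<le> Obj x" if "x \<in> D" for x
    unfolding m_def using bdd that by (simp add: cInf_lower)
  have "\<forall>n::nat. \<exists>z. z \<in> D \<and> Obj z < m + 1 / (real n + 1)"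
  proof
    fix n :: nat
    have "Inf (Obj ` D) < m + 1 / (real n + 1)" unfolding m_def by simp
    then obtain v where "v \<in> Obj ` D" "v < m + 1 / (real n + 1)"
      using cInf_lessD[of "Obj ` D"] Dne by blast
    then show "\<exists>z. z \<in> D \<and> Obj z < m + 1 / (real n + 1)" by auto
  qed
  then obtain zs where zsD: "\<And>n. zs n \<in> D" and zsl: "\<And>n. Obj (zs n) < m + 1 / (real n + 1)"
    by metis
  have zsm: "\<And>n. Obj (zs n) \<le> m + 1"
  proof -
    fix n
    have "1 / (real n + 1) \<le> 1" by simp
    then show "Obj (zs n) \<le> m + 1" using zsl[of n] by linarith
  qed
  define B where "B = sqrt (4 * a * (m + 1 - K0))"
  have nb: "norm (zs n - y) \<le> B" for n
  proof -
    have "(norm (zs n - y))\<^sup>2 / (4 * a) \<le> m + 1 - K0" using lowb[OF zsD[of n]] zsm[of n] by simp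
    then have "(norm (zs n - y))\<^sup>2 \<le> 4 * a * (m + 1 - K0)" using a by (simp add: field_simps)
    then show ?thesis unfolding B_def by (simp add: real_le_rsqrt)
  qed
  define hi where "hi = m + 1"
  define lo where "lo = c0 - c1 * (B + norm (y - xstar))"
  have hb: "h (zs n) \<in> {lo..hi}" for n
  proof -
    have "h (zs n) \<le> Obj (zs n)" unfolding Obj_def using a by simp
    then have up: "h (zs n) \<le> hi" using zsm[of n] unfolding hi_def by simp
    have "norm (zs n - xstar) \<le> B + norm (y - xstar)"
      using nb[of n] by (rule norm_diff_triangle_le) simp
    then have "c1 * norm (zs n - xstar) \<le> c1 * (B + norm (y - xstar))" using c1 by (rule mult_left_mono)
    then have "h (zs n) \<ge> lo" using hl[OF zsD[of n]] unfolding lo_def by linarith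
    with up show ?thesis by simp
  qed
  define S where "S = cball y B \<times> {lo..hi}"
  have cS: "compact S" unfolding S_def by (intro compact_Times compact_cball compact_Icc)
  have inS: "\<forall>n. (zs n, h (zs n)) \<in> S"
  proof
    fix n
    have "dist y (zs n) \<le> B" using nb[of n] by (simp add: dist_norm norm_minus_commute[of y])
    then show "(zs n, h (zs n)) \<in> S" unfolding S_def using hb[of n] by simp
  qed
  obtain l r where lS: "l \<in> S" and r: "strict_mono r" and lim: "((\<lambda>n. (zs n, h (zs n))) \<circ> r) \<longlonglongrightarrow> l"
    using seq_compactE[OF cS[unfolded compact_eq_seq_compact_metric] inS] by blast
  obtain p t where l: "l = (p, t)" by (cases l)
  have inE: "l \<in> {(x, t). x \<in> D \<and> h x \<le> t}"
    by (rule closed_sequentially[OF epi_closed _ lim]) (use zsD in auto)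
  then have pD: "p \<in> D" and hpt: "h p \<le> t" using l by auto
  have l1: "(\<lambda>n. zs (r n)) \<longlonglongrightarrow> p" using tendsto_fst[OF lim] l by (simp add: o_def)
  have l2: "(\<lambda>n. h (zs (r n))) \<longlonglongrightarrow> t" using tendsto_snd[OF lim] l by (simp add: o_def)
  have lO: "(\<lambda>n. Obj (zs (r n))) \<longlonglongrightarrow> t + (norm (p - y))\<^sup>2 / (2 * a)"
    unfolding Obj_def using a by (intro tendsto_intros l1 l2) auto
  have lm0: "(\<lambda>n. Obj (zs n)) \<longlonglongrightarrow> m"
  proof (rule real_tendsto_sandwich[where f="\<lambda>n. m" and h="\<lambda>n. m + 1 / (real n + 1)"])
    show "\<forall>\<^sub>F n in sequentially. m \<le> Obj (zs n)" using mle zsD by simp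
    show "\<forall>\<^sub>F n in sequentially. Obj (zs n) \<le> m + 1 / (real n + 1)" using zsl by (simp add: less_imp_le)
    show "(\<lambda>n. m) \<longlonglongrightarrow> m" by simp
    have "(\<lambda>n. 1 / (real n + 1)) \<longlonglongrightarrow> 0" using LIMSEQ_inverse_real_of_nat by (simp add: inverse_eq_divide add.commute)
    then show "(\<lambda>n. m + 1 / (real n + 1)) \<longlonglongrightarrow> m" using tendsto_add[OF tendsto_const[of m]] by fastforce
  qed
  have "(\<lambda>n. Obj (zs (r n))) \<longlonglongrightarrow> m" using LIMSEQ_subseq_LIMSEQ[OF lm0 r] by (simp add: o_def)
  with lO have "t + (norm (p - y))\<^sup>2 / (2 * a) = m" using LIMSEQ_unique by blast
  then have "Obj p \<le> m" unfolding Obj_def using hpt by simp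
  then have "\<forall>x\<in>D. Obj p \<le> Obj x" using mle by (meson order_trans)
  then show ?thesis using pD unfolding Obj_def by blast
qed

end


context prox_setting
begin

lemma prox_spec:
  assumes a: "a > 0"
  shows "prox a h D y \<in> D"
    "\<And>x. x \<in> D \<Longrightarrow> h (prox a h D y) + (norm (prox a h D y - y))\<^sup>2 / (2 * a) \<le> h x + (norm (x - y))\<^sup>2 / (2 * a)"
proof -
  have "\<exists>p. p \<in> D \<and> (\<forall>x\<in>D. h p + (norm (p - y))\<^sup>2 / (2 * a) \<le> h x + (norm (x - y))\<^sup>2 / (2 * a))"
    by (rule prox_exists[OF a])
  then have "prox a h D y \<in> D \<and> (\<forall>x\<in>D. h (prox a h D y) + (norm (prox a h D y - y))\<^sup>2 / (2 * a) \<le> h x + (norm (x - y))\<^sup>2 / (2 * a))"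
    unfolding prox_def by (rule someI_ex)
  then show "prox a h D y \<in> D"
    "\<And>x. x \<in> D \<Longrightarrow> h (prox a h D y) + (norm (prox a h D y - y))\<^sup>2 / (2 * a) \<le> h x + (norm (x - y))\<^sup>2 / (2 * a)"
    by auto
qed

lemma prox_char:
  assumes a: "a > 0" and u: "u \<in> D"
  shows "h u \<ge> h (prox a h D y) + ((y - prox a h D y) \<bullet> (u - prox a h D y)) / a"
proof -
  define p where "p = prox a h D y"
  have pD: "p \<in> D" unfolding p_def by (rule prox_spec(1)[OF a])
  define Q where "Q = h u - h p + ((p - y) \<bullet> (u - p)) / a"
  define C where "C = (norm (u - p))\<^sup>2 / (2 * a)"
  have C0: "C \<ge> 0" unfolding C_def using a by simp
  have key: "0 \<le> Q + t * C" if t: "0 < t" "t \<le> 1" for t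
  proof -
    define w where "w = (1 - t) *\<^sub>R p + t *\<^sub>R u"
    have wD: "w \<in> D" unfolding w_def using D_convex pD u t by (simp add: convex_alt)
    have m: "h p + (norm (p - y))\<^sup>2 / (2 * a) \<le> h w + (norm (w - y))\<^sup>2 / (2 * a)"
      unfolding p_def by (rule prox_spec(2)[OF a wD[unfolded p_def]])
    have hw: "h w \<le> (1 - t) * h p + t * h u"
      unfolding w_def using convex_onD[OF h_convex, of t p u] t pD u by simp
    have wy: "w - y = (p - y) + t *\<^sub>R (u - p)" unfolding w_def by (simp add: algebra_simps)
    have nw: "(norm (w - y))\<^sup>2 = (norm (p - y))\<^sup>2 + 2 * t * ((p - y) \<bullet> (u - p)) + t\<^sup>2 * (norm (u - p))\<^sup>2"
      unfolding wy power2_norm_eq_inner by (simp add: inner_add_left inner_add_right algebra_simps power2_eq_square inner_commute)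
    have "0 \<le> t * (h u - h p) + (2 * t * ((p - y) \<bullet> (u - p)) + t\<^sup>2 * (norm (u - p))\<^sup>2) / (2 * a)"
    proof -
      have "(norm (w - y))\<^sup>2 / (2 * a) = (norm (p - y))\<^sup>2 / (2 * a) + (2 * t * ((p - y) \<bullet> (u - p)) + t\<^sup>2 * (norm (u - p))\<^sup>2) / (2 * a)"
        unfolding nw by (simp add: add_divide_distrib)
      then show ?thesis using m hw by (simp add: algebra_simps)
    qed
    also have "\<dots> = t * (Q + t * C)" unfolding Q_def C_def using a by (simp add: field_simps power2_eq_square)
    finally show ?thesis using t by (simp add: zero_le_mult_iff)
  qed
  have "Q \<ge> 0"
  proof (rule ccontr)
    assume "\<not> Q \<ge> 0"
    then have Qn: "Q < 0" by simp
    define t where "t = min 1 (- Q / (2 * (C + 1)))"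
    have t: "0 < t" "t \<le> 1" unfolding t_def using Qn C0 by (auto simp: field_simps)
    have "t * C \<le> (- Q / (2 * (C + 1))) * C" unfolding t_def using C0 by (intro mult_right_mono) auto
    also have "\<dots> \<le> - Q / 2"
    proof -
      have "(- Q / (2 * (C + 1))) * C = (- Q / 2) * (C / (C + 1))" using C0 by (simp add: field_simps)
      also have "\<dots> \<le> (- Q / 2) * 1" using Qn C0 by (intro mult_left_mono) auto
      finally show ?thesis by simp
    qed
    finally have "Q + t * C < 0" using Qn by simp
    with key[OF t] show False by simp
  qed
  moreover have "(y - p) \<bullet> (u - p) = - ((p - y) \<bullet> (u - p))"
    by (metis inner_minus_left minus_diff_eq)
  ultimately show ?thesis unfolding Q_def p_def[symmetric] by (simp add: diff_divide_distrib)
qed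


lemma prox_nonexp:
  assumes a: "a > 0"
  shows "norm (prox a h D z1 - prox a h D z2) \<le> norm (z1 - z2)"
proof -
  define p1 where "p1 = prox a h D z1"
  define p2 where "p2 = prox a h D z2"
  have c1: "h p2 \<ge> h p1 + ((z1 - p1) \<bullet> (p2 - p1)) / a"
    unfolding p1_def p2_def by (rule prox_char[OF a prox_spec(1)[OF a]])
  have c2: "h p1 \<ge> h p2 + ((z2 - p2) \<bullet> (p1 - p2)) / a"
    unfolding p1_def p2_def by (rule prox_char[OF a prox_spec(1)[OF a]])
  have "((z1 - p1) \<bullet> (p2 - p1)) / a + ((z2 - p2) \<bullet> (p1 - p2)) / a \<le> 0" using c1 c2 by simp
  then have s: "(z1 - p1) \<bullet> (p2 - p1) + (z2 - p2) \<bullet> (p1 - p2) \<le> 0"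
    using a by (simp add: add_divide_distrib[symmetric] divide_le_0_iff)
  have "(z1 - p1) \<bullet> (p2 - p1) + (z2 - p2) \<bullet> (p1 - p2) = (norm (p1 - p2))\<^sup>2 - (z1 - z2) \<bullet> (p1 - p2)"
    unfolding power2_norm_eq_inner by (simp add: inner_diff_left inner_diff_right inner_commute algebra_simps)
  with s have "(norm (p1 - p2))\<^sup>2 \<le> (z1 - z2) \<bullet> (p1 - p2)" by simp
  also have "\<dots> \<le> norm (z1 - z2) * norm (p1 - p2)" by (rule norm_cauchy_schwarz)
  finally have "norm (p1 - p2) * norm (p1 - p2) \<le> norm (z1 - z2) * norm (p1 - p2)"
    by (simp add: power2_eq_square)
  then show ?thesis unfolding p1_def[symmetric] p2_def[symmetric]
    by (metis mult_right_le_imp_le norm_ge_zero order_le_less zero_less_norm_iff order.trans norm_zero diff_self)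
qed

lemma prox_cont: "a > 0 \<Longrightarrow> continuous_on UNIV (prox a h D)"
  by (rule lipschitz_on_continuous_on[of 1]) (auto intro!: lipschitz_onI simp: dist_norm prox_nonexp)

lemma prox_meas: "a > 0 \<Longrightarrow> prox a h D \<in> borel_measurable borel"
  by (rule borel_measurable_continuous_onI[OF prox_cont])

lemma step_ineq:
  assumes a: "a > 0" and u: "u \<in> D" and cvx: "convex_on UNIV f"
  shows "f (prox a h D (y - a *\<^sub>R g)) + h (prox a h D (y - a *\<^sub>R g))
    \<le> f u + h u + ((norm (y - u))\<^sup>2 - (norm (prox a h D (y - a *\<^sub>R g) - u))\<^sup>2) / (2 * a)
       - (1 - L * a) / (2 * a) * (norm (y - prox a h D (y - a *\<^sub>R g)))\<^sup>2
       + a * (norm (g - gradf y))\<^sup>2 - (g - gradf y) \<bullet> (prox a h D (y - a *\<^sub>R gradf y) - u)"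
proof -
  define z where "z = y - a *\<^sub>R g"
  define p where "p = prox a h D z"
  define pb where "pb = prox a h D (y - a *\<^sub>R gradf y)"
  define e where "e = g - gradf y"
  define A where "A = y - p"
  define B where "B = p - u"
  have h1: "h u \<ge> h p + ((z - p) \<bullet> (u - p)) / a" unfolding p_def by (rule prox_char[OF a u])
  have f2: "f p \<le> f y + gradf y \<bullet> (p - y) + L / 2 * (norm (p - y))\<^sup>2" by (rule descent)
  have f3: "f u \<ge> f y + gradf y \<bullet> (u - y)" by (rule convex_tangent[OF cvx fg])
  have n4: "norm (p - pb) \<le> a * norm e"
  proof -
    have "norm (p - pb) \<le> norm (z - (y - a *\<^sub>R gradf y))" unfolding p_def pb_def by (rule prox_nonexp[OF a])
    also have "z - (y - a *\<^sub>R gradf y) = - (a *\<^sub>R e)" unfolding z_def e_def by (simp add: algebra_simps)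
    finally show ?thesis using a by simp
  qed
  have e5: "- (e \<bullet> (p - pb)) \<le> a * (norm e)\<^sup>2"
  proof -
    have "- (e \<bullet> (p - pb)) \<le> norm e * norm (p - pb)"
      using Cauchy_Schwarz_ineq2[of e "p - pb"] by linarith
    also have "\<dots> \<le> norm e * (a * norm e)" by (rule mult_left_mono[OF n4 norm_ge_zero])
    finally show ?thesis by (simp add: power2_eq_square algebra_simps)
  qed
  have i1: "((z - p) \<bullet> (u - p)) / a = - (A \<bullet> B) / a + g \<bullet> B"
  proof -
    have "(z - p) \<bullet> (u - p) = - (A \<bullet> B) + a * (g \<bullet> B)"
      unfolding z_def A_def B_def by (simp add: inner_diff_left inner_diff_right inner_commute algebra_simps)
    then show ?thesis using a by (simp add: field_simps)
  qed
  have i2: "A \<bullet> B / a = ((norm (y - u))\<^sup>2 - (norm A)\<^sup>2 - (norm B)\<^sup>2) / (2 * a)"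
  proof -
    have "y - u = A + B" unfolding A_def B_def by simp
    then have "(norm (y - u))\<^sup>2 = (norm A)\<^sup>2 + 2 * (A \<bullet> B) + (norm B)\<^sup>2"
      unfolding power2_norm_eq_inner by (simp add: inner_add_left inner_add_right inner_commute)
    then show ?thesis using a by (simp add: field_simps)
  qed
  have i3: "gradf y \<bullet> (p - y) - gradf y \<bullet> (u - y) - g \<bullet> B = - (e \<bullet> B)"
    unfolding B_def e_def by (simp add: inner_diff_left inner_diff_right algebra_simps)
  have i4: "e \<bullet> B = e \<bullet> (p - pb) + e \<bullet> (pb - u)" unfolding B_def by (simp add: inner_diff_right)
  have nA: "norm (p - y) = norm A" unfolding A_def by (simp add: norm_minus_commute)
  have fin: "f p + h p \<le> f u + h u + ((norm (y - u))\<^sup>2 - (norm B)\<^sup>2) / (2 * a)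
       - (1 - L * a) / (2 * a) * (norm A)\<^sup>2 + a * (norm e)\<^sup>2 - e \<bullet> (pb - u)"
  proof -
    have "(1 - L * a) / (2 * a) * (norm A)\<^sup>2 = (norm A)\<^sup>2 / (2 * a) - L / 2 * (norm A)\<^sup>2"
      using a by (simp add: field_simps)
    moreover have "((norm (y - u))\<^sup>2 - (norm B)\<^sup>2) / (2 * a) = A \<bullet> B / a + (norm A)\<^sup>2 / (2 * a)"
      unfolding i2 using a by (simp add: field_simps)
    ultimately show ?thesis using h1 f2 f3 e5 i1 i3 i4 nA by (simp add: algebra_simps)
  qed
  then show ?thesis unfolding p_def z_def pb_def e_def A_def B_def .
qed

end


lemma ennreal_integral_le_nn:
  fixes w :: "'a \<Rightarrow> real"
  assumes w: "integrable M w"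
  shows "ennreal (\<integral>x. w x \<partial>M) \<le> (\<integral>\<^sup>+x. ennreal (w x) \<partial>M)"
proof -
  have im: "integrable M (\<lambda>x. max (w x) 0)" using w by (intro integrable_max) auto
  have "(\<integral>x. w x \<partial>M) \<le> (\<integral>x. max (w x) 0 \<partial>M)" by (rule integral_mono[OF w im]) simp
  then have "ennreal (\<integral>x. w x \<partial>M) \<le> ennreal (\<integral>x. max (w x) 0 \<partial>M)" by (rule ennreal_leI)
  also have "\<dots> = (\<integral>\<^sup>+x. ennreal (max (w x) 0) \<partial>M)"
    by (rule nn_integral_eq_integral[symmetric, OF im]) simp
  also have "\<dots> = (\<integral>\<^sup>+x. ennreal (w x) \<partial>M)"
    by (intro nn_integral_cong) (simp add: ennreal_max_0)
  finally show ?thesis .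
qed

context sigma_finite_subalgebra
begin

lemma cond_jensen_sq:
  fixes X :: "'a \<Rightarrow> real"
  assumes X: "integrable M X" and fin: "finite_measure M"
  shows "AE \<omega> in M. ennreal ((real_cond_exp M F X \<omega>)\<^sup>2) \<le> nn_cond_exp M F (\<lambda>\<omega>. ennreal ((X \<omega>)\<^sup>2)) \<omega>"
proof -
  define Z where "Z = real_cond_exp M F X"
  define N where "N = nn_cond_exp M F (\<lambda>\<omega>. ennreal ((X \<omega>)\<^sup>2))"
  have XM [measurable]: "X \<in> borel_measurable M" using X by auto
  have ZF [measurable]: "Z \<in> borel_measurable F" unfolding Z_def by simp
  have NF [measurable]: "N \<in> borel_measurable F" unfolding N_def by simp
  have ZM [measurable]: "Z \<in> borel_measurable M" unfolding Z_def by simp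
  have NM [measurable]: "N \<in> borel_measurable M" unfolding N_def by simp
  have spF: "space F = space M" using subalg unfolding subalgebra_def by simp
  have main: "AE \<omega> in M. \<not> (N \<omega> < ennreal ((Z \<omega>)\<^sup>2) \<and> \<bar>Z \<omega>\<bar> \<le> real n)" for n :: nat
  proof -
    define B where "B = {\<omega> \<in> space M. N \<omega> < ennreal ((Z \<omega>)\<^sup>2) \<and> \<bar>Z \<omega>\<bar> \<le> real n}"
    have BF [measurable]: "B \<in> sets F" unfolding B_def spF[symmetric] by measurable
    have BM [measurable]: "B \<in> sets M" using BF subalg unfolding subalgebra_def by auto
    define c where "c \<omega> = indicator B \<omega> * Z \<omega>" for \<omega>
    have cF [measurable]: "c \<in> borel_measurable F" unfolding c_def by measurable
    have cM [measurable]: "c \<in> borel_measurable M" unfolding c_def by measurable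
    have cb: "\<bar>c \<omega>\<bar> \<le> real n" for \<omega> unfolding c_def B_def by (auto simp: indicator_def)
    have icX: "integrable M (\<lambda>\<omega>. c \<omega> * X \<omega>)"
    proof (rule Bochner_Integration.integrable_bound[where f="\<lambda>\<omega>. real n * X \<omega>"])
      show "integrable M (\<lambda>\<omega>. real n * X \<omega>)" using X by simp
      show "(\<lambda>\<omega>. c \<omega> * X \<omega>) \<in> borel_measurable M" by measurable
      show "AE \<omega> in M. norm (c \<omega> * X \<omega>) \<le> norm (real n * X \<omega>)"
        using cb by (auto simp: abs_mult intro!: mult_right_mono)
    qed
    have icZ: "integrable M (\<lambda>\<omega>. indicator B \<omega> * (Z \<omega>)\<^sup>2)"
    proof (rule Bochner_Integration.integrable_bound[where f="\<lambda>\<omega>. (real n)\<^sup>2"])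
      show "integrable M (\<lambda>\<omega>. (real n)\<^sup>2)" using fin by (simp add: finite_measure.integrable_const)
      show "(\<lambda>\<omega>. indicator B \<omega> * (Z \<omega>)\<^sup>2) \<in> borel_measurable M" by measurable
      show "AE \<omega> in M. norm (indicator B \<omega> * (Z \<omega>)\<^sup>2) \<le> norm ((real n)\<^sup>2)"
      proof (intro AE_I2)
        fix \<omega> assume "\<omega> \<in> space M"
        have "(Z \<omega>)\<^sup>2 \<le> (real n)\<^sup>2" if "\<omega> \<in> B"
        proof -
          have "\<bar>Z \<omega>\<bar> \<le> \<bar>real n\<bar>" using that unfolding B_def by simp
          then show ?thesis by (simp only: abs_le_square_iff)
        qed
        then show "norm (indicator B \<omega> * (Z \<omega>)\<^sup>2) \<le> norm ((real n)\<^sup>2)" by (auto simp: indicator_def)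
      qed
    qed
    have E1: "(\<integral>\<omega>. c \<omega> * X \<omega> \<partial>M) = (\<integral>\<omega>. indicator B \<omega> * (Z \<omega>)\<^sup>2 \<partial>M)"
    proof -
      have "(\<integral>\<omega>. c \<omega> * X \<omega> \<partial>M) = (\<integral>\<omega>. c \<omega> * Z \<omega> \<partial>M)"
        unfolding Z_def by (rule real_cond_exp_intg(2)[OF icX cF XM, symmetric])
      also have "\<dots> = (\<integral>\<omega>. indicator B \<omega> * (Z \<omega>)\<^sup>2 \<partial>M)"
        unfolding c_def by (simp add: power2_eq_square mult.assoc)
      finally show ?thesis .
    qed
    define w where "w \<omega> = 2 * (c \<omega> * X \<omega>) - indicator B \<omega> * (Z \<omega>)\<^sup>2" for \<omega>
    have iw: "integrable M w" unfolding w_def using icX icZ by auto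
    have Iw: "(\<integral>\<omega>. w \<omega> \<partial>M) = (\<integral>\<omega>. indicator B \<omega> * (Z \<omega>)\<^sup>2 \<partial>M)"
      unfolding w_def using icX icZ E1 by simp
    have wle: "ennreal (w \<omega>) \<le> indicator B \<omega> * ennreal ((X \<omega>)\<^sup>2)" for \<omega>
    proof -
      have "w \<omega> \<le> indicator B \<omega> * (X \<omega>)\<^sup>2"
      proof -
        have "indicator B \<omega> * (X \<omega>)\<^sup>2 - w \<omega> = indicator B \<omega> * (X \<omega> - Z \<omega>)\<^sup>2"
          unfolding w_def c_def by (simp add: power2_eq_square algebra_simps)
        also have "\<dots> \<ge> 0" by simp
        finally show ?thesis by simp
      qed
      then have "ennreal (w \<omega>) \<le> ennreal (indicator B \<omega> * (X \<omega>)\<^sup>2)" by (rule ennreal_leI)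
      also have "\<dots> = indicator B \<omega> * ennreal ((X \<omega>)\<^sup>2)" by (simp add: indicator_def)
      finally show ?thesis .
    qed
    define G where "G \<omega> = ennreal (indicator B \<omega> * (Z \<omega>)\<^sup>2)" for \<omega>
    define H where "H \<omega> = indicator B \<omega> * N \<omega>" for \<omega>
    have GM [measurable]: "G \<in> borel_measurable M" unfolding G_def by measurable
    have HM [measurable]: "H \<in> borel_measurable M" unfolding H_def by measurable
    have intG: "(\<integral>\<^sup>+\<omega>. G \<omega> \<partial>M) = ennreal (\<integral>\<omega>. indicator B \<omega> * (Z \<omega>)\<^sup>2 \<partial>M)"
      unfolding G_def by (rule nn_integral_eq_integral[OF icZ]) simp
    have "(\<integral>\<^sup>+\<omega>. G \<omega> \<partial>M) \<le> (\<integral>\<^sup>+\<omega>. H \<omega> \<partial>M)"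
    proof -
      have "(\<integral>\<^sup>+\<omega>. G \<omega> \<partial>M) = ennreal (\<integral>\<omega>. w \<omega> \<partial>M)" unfolding intG Iw ..
      also have "\<dots> \<le> (\<integral>\<^sup>+\<omega>. ennreal (w \<omega>) \<partial>M)" by (rule ennreal_integral_le_nn[OF iw])
      also have "\<dots> \<le> (\<integral>\<^sup>+\<omega>. indicator B \<omega> * ennreal ((X \<omega>)\<^sup>2) \<partial>M)" by (intro nn_integral_mono wle)
      also have "\<dots> = (\<integral>\<^sup>+\<omega>. indicator B \<omega> * N \<omega> \<partial>M)"
        unfolding N_def by (rule nn_cond_exp_intg[symmetric]) measurable
      finally show ?thesis unfolding H_def .
    qed
    moreover have HG: "H \<omega> \<le> G \<omega>" for \<omega>
      unfolding H_def G_def B_def by (auto simp: indicator_def less_imp_le)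
    moreover have Gfin: "(\<integral>\<^sup>+\<omega>. G \<omega> \<partial>M) \<noteq> \<infinity>" unfolding intG by simp
    ultimately have eq: "(\<integral>\<^sup>+\<omega>. G \<omega> \<partial>M) = (\<integral>\<^sup>+\<omega>. H \<omega> \<partial>M)"
      by (meson antisym nn_integral_mono)
    have Hfin: "(\<integral>\<^sup>+\<omega>. H \<omega> \<partial>M) \<noteq> \<infinity>" using Gfin eq by simp
    have "(\<integral>\<^sup>+\<omega>. G \<omega> - H \<omega> \<partial>M) = (\<integral>\<^sup>+\<omega>. G \<omega> \<partial>M) - (\<integral>\<^sup>+\<omega>. H \<omega> \<partial>M)"
      by (rule nn_integral_diff[OF GM HM Hfin]) (simp add: HG)
    also have "\<dots> = 0" using eq Hfin by simp
    finally have "AE \<omega> in M. G \<omega> - H \<omega> = 0" by (subst nn_integral_0_iff_AE[symmetric]) auto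
    moreover have "AE \<omega> in M. \<omega> \<in> space M" by (rule AE_space)
    ultimately show ?thesis
    proof eventually_elim
      case (elim \<omega>)
      show "\<not> (N \<omega> < ennreal ((Z \<omega>)\<^sup>2) \<and> \<bar>Z \<omega>\<bar> \<le> real n)"
      proof
        assume a: "N \<omega> < ennreal ((Z \<omega>)\<^sup>2) \<and> \<bar>Z \<omega>\<bar> \<le> real n"
        then have "\<omega> \<in> B" using elim unfolding B_def by simp
        then have "H \<omega> < G \<omega>" unfolding H_def G_def using a by simp
        then have "0 < G \<omega> - H \<omega>" by (rule diff_gr0_ennreal)
        with elim show False by simp
      qed
    qed
  qed
  have "AE \<omega> in M. \<forall>n::nat. \<not> (N \<omega> < ennreal ((Z \<omega>)\<^sup>2) \<and> \<bar>Z \<omega>\<bar> \<le> real n)"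
    unfolding AE_all_countable using main by blast
  then show ?thesis
  proof eventually_elim
    case (elim \<omega>)
    note a = elim
    obtain n :: nat where "\<bar>Z \<omega>\<bar> \<le> real n" using real_arch_simple by blast
    with a have "\<not> N \<omega> < ennreal ((Z \<omega>)\<^sup>2)" by blast
    then show "ennreal ((real_cond_exp M F X \<omega>)\<^sup>2) \<le> nn_cond_exp M F (\<lambda>\<omega>. ennreal ((X \<omega>)\<^sup>2)) \<omega>"
      unfolding Z_def N_def by simp
  qed
qed

end


definition sqi :: "'w measure \<Rightarrow> ('w \<Rightarrow> 'a::euclidean_space) \<Rightarrow> bool" where
  "sqi M Z \<longleftrightarrow> Z \<in> borel_measurable M \<and> integrable M (\<lambda>\<omega>. (norm (Z \<omega>))\<^sup>2)"

context prob_space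
begin

lemma sqi_bound:
  fixes Z :: "'a \<Rightarrow> 'b::euclidean_space" and W :: "'a \<Rightarrow> 'c::euclidean_space"
  assumes Z: "sqi M Z" and W: "W \<in> borel_measurable M" and b: "b \<ge> 0"
    and bd: "\<And>\<omega>. \<omega> \<in> space M \<Longrightarrow> norm (W \<omega>) \<le> a + b * norm (Z \<omega>)"
  shows "sqi M W"
  unfolding sqi_def
proof
  show "W \<in> borel_measurable M" by (rule W)
  show "integrable M (\<lambda>\<omega>. (norm (W \<omega>))\<^sup>2)"
  proof (rule Bochner_Integration.integrable_bound[where f="\<lambda>\<omega>. 2 * a\<^sup>2 + 2 * b\<^sup>2 * (norm (Z \<omega>))\<^sup>2"])
    show "integrable M (\<lambda>\<omega>. 2 * a\<^sup>2 + 2 * b\<^sup>2 * (norm (Z \<omega>))\<^sup>2)" using Z unfolding sqi_def by auto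
    show "(\<lambda>\<omega>. (norm (W \<omega>))\<^sup>2) \<in> borel_measurable M" using W by measurable
    show "AE \<omega> in M. norm ((norm (W \<omega>))\<^sup>2) \<le> norm (2 * a\<^sup>2 + 2 * b\<^sup>2 * (norm (Z \<omega>))\<^sup>2)"
    proof (intro AE_I2)
      fix \<omega> assume "\<omega> \<in> space M"
      then have n: "norm (W \<omega>) \<le> a + b * norm (Z \<omega>)" by (rule bd)
      then have "(norm (W \<omega>))\<^sup>2 \<le> (a + b * norm (Z \<omega>))\<^sup>2" by (intro power_mono) auto
      also have "\<dots> \<le> 2 * a\<^sup>2 + 2 * b\<^sup>2 * (norm (Z \<omega>))\<^sup>2"
      proof -
        have "0 \<le> (a - b * norm (Z \<omega>))\<^sup>2" by simp
        then show ?thesis by (simp add: power2_eq_square algebra_simps)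
      qed
      finally show "norm ((norm (W \<omega>))\<^sup>2) \<le> norm (2 * a\<^sup>2 + 2 * b\<^sup>2 * (norm (Z \<omega>))\<^sup>2)" by simp
    qed
  qed
qed

lemma sqi_const: "sqi M (\<lambda>_. c)"
  unfolding sqi_def by simp

lemma sqi_add:
  fixes Z W :: "'a \<Rightarrow> 'b::euclidean_space"
  assumes Z: "sqi M Z" and W: "sqi M W"
  shows "sqi M (\<lambda>\<omega>. Z \<omega> + W \<omega>)"
  unfolding sqi_def
proof
  have [measurable]: "Z \<in> borel_measurable M" "W \<in> borel_measurable M" using Z W unfolding sqi_def by auto
  show "(\<lambda>\<omega>. Z \<omega> + W \<omega>) \<in> borel_measurable M" by measurable
  show "integrable M (\<lambda>\<omega>. (norm (Z \<omega> + W \<omega>))\<^sup>2)"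
  proof (rule Bochner_Integration.integrable_bound[where f="\<lambda>\<omega>. 2 * (norm (Z \<omega>))\<^sup>2 + 2 * (norm (W \<omega>))\<^sup>2"])
    show "integrable M (\<lambda>\<omega>. 2 * (norm (Z \<omega>))\<^sup>2 + 2 * (norm (W \<omega>))\<^sup>2)" using Z W unfolding sqi_def by auto
    show "(\<lambda>\<omega>. (norm (Z \<omega> + W \<omega>))\<^sup>2) \<in> borel_measurable M" by measurable
    show "AE \<omega> in M. norm ((norm (Z \<omega> + W \<omega>))\<^sup>2) \<le> norm (2 * (norm (Z \<omega>))\<^sup>2 + 2 * (norm (W \<omega>))\<^sup>2)"
    proof (intro AE_I2)
      fix \<omega>
      have "(norm (Z \<omega> + W \<omega>))\<^sup>2 \<le> (norm (Z \<omega>) + norm (W \<omega>))\<^sup>2"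
        by (intro power_mono norm_triangle_ineq) auto
      also have "\<dots> \<le> 2 * (norm (Z \<omega>))\<^sup>2 + 2 * (norm (W \<omega>))\<^sup>2"
      proof -
        have "0 \<le> (norm (Z \<omega>) - norm (W \<omega>))\<^sup>2" by simp
        then show ?thesis by (simp add: power2_eq_square algebra_simps)
      qed
      finally show "norm ((norm (Z \<omega> + W \<omega>))\<^sup>2) \<le> norm (2 * (norm (Z \<omega>))\<^sup>2 + 2 * (norm (W \<omega>))\<^sup>2)" by simp
    qed
  qed
qed

lemma sqi_scale:
  fixes Z :: "'a \<Rightarrow> 'b::euclidean_space"
  assumes Z: "sqi M Z"
  shows "sqi M (\<lambda>\<omega>. c *\<^sub>R Z \<omega>)"
  using Z unfolding sqi_def by (auto simp: power_mult_distrib)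

lemma sqi_diff:
  fixes Z W :: "'a \<Rightarrow> 'b::euclidean_space"
  assumes Z: "sqi M Z" and W: "sqi M W"
  shows "sqi M (\<lambda>\<omega>. Z \<omega> - W \<omega>)"
  using sqi_add[OF Z sqi_scale[OF W, of "-1"]] by simp

lemma sqi_meas: "sqi M Z \<Longrightarrow> Z \<in> borel_measurable M"
  unfolding sqi_def by simp

lemma sqi_int2: "sqi M Z \<Longrightarrow> integrable M (\<lambda>\<omega>. (norm (Z \<omega>))\<^sup>2)"
  unfolding sqi_def by simp

lemma sqi_inner:
  fixes Z W :: "'a \<Rightarrow> 'b::euclidean_space"
  assumes Z: "sqi M Z" and W: "sqi M W"
  shows "integrable M (\<lambda>\<omega>. Z \<omega> \<bullet> W \<omega>)"
proof (rule Bochner_Integration.integrable_bound[where f="\<lambda>\<omega>. (norm (Z \<omega>))\<^sup>2 + (norm (W \<omega>))\<^sup>2"])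
  have [measurable]: "Z \<in> borel_measurable M" "W \<in> borel_measurable M" using Z W unfolding sqi_def by auto
  show "integrable M (\<lambda>\<omega>. (norm (Z \<omega>))\<^sup>2 + (norm (W \<omega>))\<^sup>2)" using Z W unfolding sqi_def by auto
  show "(\<lambda>\<omega>. Z \<omega> \<bullet> W \<omega>) \<in> borel_measurable M" by measurable
  show "AE \<omega> in M. norm (Z \<omega> \<bullet> W \<omega>) \<le> norm ((norm (Z \<omega>))\<^sup>2 + (norm (W \<omega>))\<^sup>2)"
  proof (intro AE_I2)
    fix \<omega>
    have "\<bar>Z \<omega> \<bullet> W \<omega>\<bar> \<le> norm (Z \<omega>) * norm (W \<omega>)" by (rule Cauchy_Schwarz_ineq2)
    also have "\<dots> \<le> (norm (Z \<omega>))\<^sup>2 + (norm (W \<omega>))\<^sup>2"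
    proof -
      have "0 \<le> (norm (Z \<omega>) - norm (W \<omega>))\<^sup>2" by simp
      moreover have "0 \<le> norm (Z \<omega>) * norm (W \<omega>)" by simp
      ultimately show ?thesis by (simp add: power2_eq_square algebra_simps) (smt (verit) mult_nonneg_nonneg norm_ge_zero)
    qed
    finally show "norm (Z \<omega> \<bullet> W \<omega>) \<le> norm ((norm (Z \<omega>))\<^sup>2 + (norm (W \<omega>))\<^sup>2)" by simp
  qed
qed

lemma sqi_integrable:
  fixes Z :: "'a \<Rightarrow> 'b::euclidean_space"
  assumes Z: "sqi M Z"
  shows "integrable M Z"
proof (rule Bochner_Integration.integrable_bound[where f="\<lambda>\<omega>. 1 + (norm (Z \<omega>))\<^sup>2"])
  show "integrable M (\<lambda>\<omega>. 1 + (norm (Z \<omega>))\<^sup>2)" using Z unfolding sqi_def by auto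
  show "Z \<in> borel_measurable M" using Z unfolding sqi_def by auto
  show "AE \<omega> in M. norm (Z \<omega>) \<le> norm (1 + (norm (Z \<omega>))\<^sup>2)"
  proof (intro AE_I2)
    fix \<omega>
    have "norm (Z \<omega>) \<le> 1 + (norm (Z \<omega>))\<^sup>2"
    proof -
      have "0 \<le> (norm (Z \<omega>) - 1/2)\<^sup>2" by simp
      then show ?thesis by (simp add: power2_eq_square algebra_simps)
    qed
    then show "norm (Z \<omega>) \<le> norm (1 + (norm (Z \<omega>))\<^sup>2)" by simp
  qed
qed

lemma sqi_comp_integrable:
  fixes Z :: "'a \<Rightarrow> 'b::euclidean_space"
  assumes Z: "sqi M Z"
  shows "integrable M (\<lambda>\<omega>. Z \<omega> \<bullet> v)"
  using sqi_inner[OF Z sqi_const] .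

end

context sigma_finite_subalgebra
begin

lemma nn_cond_exp_setsum:
  assumes I: "finite I" and u: "\<And>i. i \<in> I \<Longrightarrow> u i \<in> borel_measurable M"
  shows "AE \<omega> in M. nn_cond_exp M F (\<lambda>\<omega>. \<Sum>i\<in>I. u i \<omega>) \<omega> = (\<Sum>i\<in>I. nn_cond_exp M F (u i) \<omega>)"
  using I u
proof (induction I rule: finite_induct)
  case empty
  have "AE \<omega> in M. (\<lambda>_. 0::ennreal) \<omega> = nn_cond_exp M F (\<lambda>_. 0) \<omega>"
    by (rule nn_cond_exp_F_meas) simp
  then show ?case by (auto elim!: AE_mp)
next
  case (insert j I)
  have uj [measurable]: "u j \<in> borel_measurable M" using insert by simp
  have us [measurable]: "(\<lambda>\<omega>. \<Sum>i\<in>I. u i \<omega>) \<in> borel_measurable M"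
    using insert by (intro borel_measurable_sum) auto
  have "AE \<omega> in M. nn_cond_exp M F (u j) \<omega> + nn_cond_exp M F (\<lambda>\<omega>. \<Sum>i\<in>I. u i \<omega>) \<omega>
      = nn_cond_exp M F (\<lambda>\<omega>. u j \<omega> + (\<Sum>i\<in>I. u i \<omega>)) \<omega>"
    by (rule nn_cond_exp_sum[OF uj us])
  moreover have "AE \<omega> in M. nn_cond_exp M F (\<lambda>\<omega>. \<Sum>i\<in>I. u i \<omega>) \<omega> = (\<Sum>i\<in>I. nn_cond_exp M F (u i) \<omega>)"
    using insert by simp
  ultimately show ?case using insert by (auto elim!: AE_mp)
qed

lemma nn_integral_nn_cond_exp:
  assumes [measurable]: "u \<in> borel_measurable M"
  shows "(\<integral>\<^sup>+\<omega>. nn_cond_exp M F u \<omega> \<partial>M) = (\<integral>\<^sup>+\<omega>. u \<omega> \<partial>M)"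
  using nn_cond_exp_intg[of "\<lambda>_. 1" u] by simp

end


lemma Filt_gen_Pow: "(\<Union>i<k. {g i -` A \<inter> space M | A. A \<in> sets borel}) \<subseteq> Pow (space M)"
  by auto

lemma space_Filt[simp]: "space (Filt M g k) = space M"
  unfolding Filt_def by (rule space_measure_of[OF Filt_gen_Pow])

lemma sets_Filt: "sets (Filt M g k) = sigma_sets (space M) (\<Union>i<k. {g i -` A \<inter> space M | A. A \<in> sets borel})"
  unfolding Filt_def by (rule sets_measure_of[OF Filt_gen_Pow])

lemma Filt_subalg:
  assumes gm: "\<And>i. g i \<in> borel_measurable M"
  shows "subalgebra M (Filt M g k)"
  unfolding subalgebra_def
proof
  show "space (Filt M g k) = space M" by simp
  have "(\<Union>i<k. {g i -` A \<inter> space M | A. A \<in> sets borel}) \<subseteq> sets M"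
    using gm by (auto simp: measurable_sets)
  then show "sets (Filt M g k) \<subseteq> sets M"
    unfolding sets_Filt by (rule sets.sigma_sets_subset)
qed

lemma Filt_sfs:
  assumes gm: "\<And>i. g i \<in> borel_measurable M" and P: "prob_space M"
  shows "sigma_finite_subalgebra M (Filt M g k)"
proof -
  have "finite_measure_subalgebra M (Filt M g k)"
    unfolding finite_measure_subalgebra_def finite_measure_subalgebra_axioms_def
    using Filt_subalg[of g M k] gm P by (auto intro: prob_space.finite_measure)
  then show ?thesis by (rule finite_measure_subalgebra_is_sigma_finite)
qed

lemma Filt_g_meas:
  fixes g :: "nat \<Rightarrow> 'w \<Rightarrow> 'a::euclidean_space"
  assumes "i < k"
  shows "g i \<in> borel_measurable (Filt M g k)"
proof (rule measurableI)
  fix A :: "'a set" assume "A \<in> sets borel"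
  then have "g i -` A \<inter> space M \<in> (\<Union>i<k. {g i -` A \<inter> space M | A. A \<in> sets borel})"
    using assms by blast
  then show "g i -` A \<inter> space (Filt M g k) \<in> sets (Filt M g k)"
    unfolding sets_Filt by auto
qed simp

lemma Filt_mono_meas:
  assumes "k \<le> k'" and "u \<in> borel_measurable (Filt M g k)"
  shows "u \<in> borel_measurable (Filt M g k')"
proof -
  have "sets (Filt M g k) \<subseteq> sets (Filt M g k')"
    unfolding sets_Filt using assms(1) by (intro sigma_sets_subseteq UN_mono) auto
  then show ?thesis using assms(2) unfolding measurable_def by auto
qed

lemma apg_xy_Suc_simps:
  "fst (apg_xy h D a b x0 G (Suc k)) = prox (a k) h D (snd (apg_xy h D a b x0 G k) - a k *\<^sub>R G k)"
  "snd (apg_xy h D a b x0 G (Suc k)) = fst (apg_xy h D a b x0 G (Suc k))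
      + b (Suc k) *\<^sub>R (fst (apg_xy h D a b x0 G (Suc k)) - fst (apg_xy h D a b x0 G k))"
  by (simp_all add: Let_def)

locale apg = prox_setting f gradf L h D xstar
  for f :: "'a::euclidean_space \<Rightarrow> real" and gradf L h D xstar +
  fixes M :: "'w measure" and g :: "nat \<Rightarrow> 'w \<Rightarrow> 'a" and x0 :: 'a
    and \<alpha> \<eta> \<iota>0 :: real and \<delta> :: "nat \<Rightarrow> real" and b :: "nat \<Rightarrow> real"
  assumes cvx: "convex_on UNIV f"
    and M_prob: "prob_space M"
    and g_meas: "\<And>k. g k \<in> borel_measurable M"
    and g_int: "\<And>k. integrable M (g k)"
    and eta: "0 \<le> \<eta>" "\<eta> < 1"
    and alpha_pos: "\<alpha> > 0"
    and alpha_le: "\<alpha> * L \<le> 1 - \<eta>"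
    and unb: "unbiased M gradf h D (\<lambda>_. \<alpha>) b x0 g"
    and cC: "condC M gradf h D (\<lambda>_. \<alpha>) b x0 g (\<lambda>_. \<eta>) \<iota>0 \<delta>"
begin

interpretation P: prob_space M by (rule M_prob)

abbreviation "X k \<equiv> xit h D (\<lambda>_. \<alpha>) b x0 g k"
abbreviation "Y k \<equiv> yit h D (\<lambda>_. \<alpha>) b x0 g k"
abbreviation "Fk k \<equiv> Filt M g k"

lemma X0: "X 0 \<omega> = x0" and Y0: "Y 0 \<omega> = x0"
  unfolding xit_def yit_def by simp_all

lemma XSuc: "X (Suc k) \<omega> = prox \<alpha> h D (Y k \<omega> - \<alpha> *\<^sub>R g k \<omega>)"
  unfolding xit_def yit_def by (simp add: Let_def)

lemma YSuc: "Y (Suc k) \<omega> = X (Suc k) \<omega> + b (Suc k) *\<^sub>R (X (Suc k) \<omega> - X k \<omega>)"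
  unfolding xit_def yit_def by (simp add: Let_def)

lemma sfs: "sigma_finite_subalgebra M (Fk k)"
  by (rule Filt_sfs[OF g_meas M_prob])

lemma subalg: "subalgebra M (Fk k)"
  by (rule Filt_subalg[OF g_meas])

lemma FtoM: "u \<in> borel_measurable (Fk k) \<Longrightarrow> u \<in> borel_measurable M"
  by (rule measurable_from_subalg[OF subalg])

lemma gradf_cont: "continuous_on UNIV gradf"
proof (rule lipschitz_on_continuous_on[of L])
  show "L-lipschitz_on UNIV gradf"
    by (rule lipschitz_onI) (use lip L_pos in \<open>auto simp: dist_norm\<close>)
qed

lemma gradf_meas [measurable]: "gradf \<in> borel_measurable borel"
  by (rule borel_measurable_continuous_onI[OF gradf_cont])

lemma proxa_meas [measurable]: "prox \<alpha> h D \<in> borel_measurable borel"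
  by (rule prox_meas[OF alpha_pos])

lemma XY_F: "X k \<in> borel_measurable (Fk k) \<and> Y k \<in> borel_measurable (Fk k)"
proof (induction k)
  case 0
  then show ?case by (simp add: X0 Y0)
next
  case (Suc k)
  have Yk: "Y k \<in> borel_measurable (Fk (Suc k))" using Suc Filt_mono_meas[of k "Suc k"] by auto
  have Xk: "X k \<in> borel_measurable (Fk (Suc k))" using Suc Filt_mono_meas[of k "Suc k"] by auto
  have gk: "g k \<in> borel_measurable (Fk (Suc k))" by (rule Filt_g_meas) simp
  have "(\<lambda>\<omega>. Y k \<omega> - \<alpha> *\<^sub>R g k \<omega>) \<in> borel_measurable (Fk (Suc k))"
    using Yk gk by measurable
  then have XS: "X (Suc k) \<in> borel_measurable (Fk (Suc k))"
    unfolding XSuc by (rule measurable_compose[OF _ proxa_meas])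
  have "Y (Suc k) \<in> borel_measurable (Fk (Suc k))"
    unfolding YSuc using XS Xk by measurable
  with XS show ?case by simp
qed

lemma X_F: "X k \<in> borel_measurable (Fk k)" and Y_F: "Y k \<in> borel_measurable (Fk k)"
  using XY_F by auto

lemma X_M [measurable]: "X k \<in> borel_measurable M" and Y_M [measurable]: "Y k \<in> borel_measurable M"
  using FtoM X_F Y_F by auto

lemma X_D: "X (Suc k) \<omega> \<in> D"
  unfolding XSuc by (rule prox_spec(1)[OF alpha_pos])

end


lemma norm2_basis_sum: "(norm (x::'a::euclidean_space))\<^sup>2 = (\<Sum>i\<in>Basis. (x \<bullet> i)\<^sup>2)"
  unfolding power2_norm_eq_inner by (subst euclidean_inner) (simp add: power2_eq_square)

context apg
begin

lemma gradf_bound: "norm (gradf y) \<le> norm (gradf 0) + L * norm y"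
  using lip[of y 0] norm_triangle_ineq2[of "gradf y" "gradf 0"] by simp

lemma prox_bound: "norm (prox \<alpha> h D z) \<le> norm (prox \<alpha> h D 0) + norm z"
  using prox_nonexp[OF alpha_pos, of z 0] norm_triangle_ineq2[of "prox \<alpha> h D z" "prox \<alpha> h D 0"] by simp

lemma sq2: "(norm (u + v))\<^sup>2 \<le> 2 * (norm u)\<^sup>2 + 2 * (norm (v::'a))\<^sup>2"
proof -
  have "(norm (u + v))\<^sup>2 \<le> (norm u + norm v)\<^sup>2" by (intro power_mono norm_triangle_ineq) auto
  also have "\<dots> \<le> 2 * (norm u)\<^sup>2 + 2 * (norm v)\<^sup>2"
  proof -
    have "0 \<le> (norm u - norm v)\<^sup>2" by simp
    then show ?thesis by (simp add: power2_eq_square algebra_simps)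
  qed
  finally show ?thesis .
qed

lemma e_bounds:
  assumes Ysq: "sqi M (Y k)"
  shows "sqi M (\<lambda>\<omega>. g k \<omega> - gradf (Y k \<omega>))"
    "sqi M (\<lambda>\<omega>. Rit h D (\<lambda>_. \<alpha>) b x0 g k \<omega>)"
    "(\<integral>\<omega>. (norm (g k \<omega> - gradf (Y k \<omega>)))\<^sup>2 \<partial>M)
       \<le> \<eta>\<^sup>2 / 4 * (\<integral>\<omega>. (norm (Rit h D (\<lambda>_. \<alpha>) b x0 g k \<omega>))\<^sup>2 \<partial>M) + \<iota>0\<^sup>2 * (\<delta> k)\<^sup>2"
proof -
  interpret P: prob_space M by (rule M_prob)
  interpret S: sigma_finite_subalgebra M "Fk k" by (rule sfs)
  define Gy where "Gy \<omega> = gradf (Y k \<omega>)" for \<omega>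
  define e where "e \<omega> = g k \<omega> - Gy \<omega>" for \<omega>
  define Xb where "Xb \<omega> = prox \<alpha> h D (Y k \<omega> - \<alpha> *\<^sub>R Gy \<omega>)" for \<omega>
  define Rb where "Rb \<omega> = (1 / \<alpha>) *\<^sub>R (Y k \<omega> - Xb \<omega>)" for \<omega>
  define R where "R \<omega> = Rit h D (\<lambda>_. \<alpha>) b x0 g k \<omega>" for \<omega>
  define c where "c = \<iota>0\<^sup>2 * (\<delta> k)\<^sup>2"
  have c0: "c \<ge> 0" unfolding c_def by simp
  have R_eq: "R \<omega> = (1 / \<alpha>) *\<^sub>R (Y k \<omega> - X (Suc k) \<omega>)" for \<omega>
    unfolding R_def Rit_def by simp
  have YF [measurable]: "Y k \<in> borel_measurable (Fk k)" by (rule Y_F)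
  have GyF [measurable]: "Gy \<in> borel_measurable (Fk k)" unfolding Gy_def by measurable
  have XbF [measurable]: "Xb \<in> borel_measurable (Fk k)" unfolding Xb_def by measurable
  have RbF [measurable]: "Rb \<in> borel_measurable (Fk k)" unfolding Rb_def by measurable
  have RbM [measurable]: "Rb \<in> borel_measurable M" by (rule FtoM[OF RbF])
  have GyM [measurable]: "Gy \<in> borel_measurable M" by (rule FtoM[OF GyF])
  have gM [measurable]: "g k \<in> borel_measurable M" by (rule g_meas)
  have eM [measurable]: "e \<in> borel_measurable M" unfolding e_def by measurable
  have RM [measurable]: "R \<in> borel_measurable M" unfolding R_eq[abs_def] by measurable
  have Gysq: "sqi M Gy"
    by (rule P.sqi_bound[OF Ysq GyM, of L "norm (gradf 0)"]) (use L_pos gradf_bound in \<open>auto simp: Gy_def\<close>)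
  have Xbsq: "sqi M Xb"
  proof (rule P.sqi_bound[OF P.sqi_diff[OF Ysq P.sqi_scale[OF Gysq]] FtoM[OF XbF], of 1 "norm (prox \<alpha> h D 0)"])
    fix \<omega> show "norm (Xb \<omega>) \<le> norm (prox \<alpha> h D 0) + 1 * norm (Y k \<omega> - \<alpha> *\<^sub>R Gy \<omega>)"
      unfolding Xb_def using prox_bound by simp
  qed simp
  have Rbsq: "sqi M Rb" unfolding Rb_def by (intro P.sqi_scale P.sqi_diff Ysq Xbsq)
  have ie: "integrable M e" unfolding e_def using g_int P.sqi_integrable[OF Gysq] by simp
  have RRb: "norm (R \<omega> - Rb \<omega>) \<le> norm (e \<omega>)" for \<omega>
  proof -
    have "R \<omega> - Rb \<omega> = (1 / \<alpha>) *\<^sub>R (Xb \<omega> - X (Suc k) \<omega>)" unfolding R_eq Rb_def by (simp add: algebra_simps)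
    moreover have "norm (X (Suc k) \<omega> - Xb \<omega>) \<le> \<alpha> * norm (e \<omega>)"
    proof -
      have "norm (X (Suc k) \<omega> - Xb \<omega>) \<le> norm ((Y k \<omega> - \<alpha> *\<^sub>R g k \<omega>) - (Y k \<omega> - \<alpha> *\<^sub>R Gy \<omega>))"
        unfolding XSuc Xb_def by (rule prox_nonexp[OF alpha_pos])
      also have "(Y k \<omega> - \<alpha> *\<^sub>R g k \<omega>) - (Y k \<omega> - \<alpha> *\<^sub>R Gy \<omega>) = - (\<alpha> *\<^sub>R e \<omega>)"
        unfolding e_def by (simp add: algebra_simps)
      finally show ?thesis using alpha_pos by simp
    qed
    ultimately have "norm (R \<omega> - Rb \<omega>) = (1 / \<alpha>) * norm (X (Suc k) \<omega> - Xb \<omega>)"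
      using alpha_pos by (simp add: norm_minus_commute[of "Xb \<omega>"])
    also have "\<dots> \<le> (1 / \<alpha>) * (\<alpha> * norm (e \<omega>))"
      using \<open>norm (X (Suc k) \<omega> - Xb \<omega>) \<le> \<alpha> * norm (e \<omega>)\<close> alpha_pos by (intro mult_left_mono) auto
    finally show ?thesis using alpha_pos by simp
  qed
  have Rnorm: "norm (R \<omega>) \<le> norm (Rb \<omega>) + norm (e \<omega>)" for \<omega>
    using RRb[of \<omega>] norm_triangle_ineq2[of "R \<omega>" "Rb \<omega>"] by simp
  have R2: "(norm (R \<omega>))\<^sup>2 \<le> 2 * (norm (Rb \<omega>))\<^sup>2 + 2 * (norm (e \<omega>))\<^sup>2" for \<omega>
    using sq2[of "Rb \<omega>" "R \<omega> - Rb \<omega>"] RRb[of \<omega>]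
    by (smt (verit, best) add.commute diff_add_cancel norm_ge_zero power_mono)
  have iR: "integrable M R"
  proof (rule Bochner_Integration.integrable_bound[where f="\<lambda>\<omega>. norm (Rb \<omega>) + norm (e \<omega>)"])
    show "integrable M (\<lambda>\<omega>. norm (Rb \<omega>) + norm (e \<omega>))"
      using P.sqi_integrable[OF Rbsq] ie by auto
  qed (use Rnorm in auto)
  have iRi: "integrable M (\<lambda>\<omega>. R \<omega> \<bullet> i)" for i
    using iR by (rule integrable_inner_left)
  define N where "N = nn_cond_exp M (Fk k) (\<lambda>\<omega>. ennreal ((norm (e \<omega>))\<^sup>2))"
  define Sf where "Sf \<omega> = (\<Sum>i\<in>Basis. (real_cond_exp M (Fk k) (\<lambda>\<omega>. R \<omega> \<bullet> i) \<omega>)\<^sup>2)" for \<omega>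
  have SfM [measurable]: "Sf \<in> borel_measurable M" unfolding Sf_def by measurable
  have NM [measurable]: "N \<in> borel_measurable M" unfolding N_def by measurable
  have Sf0: "Sf \<omega> \<ge> 0" for \<omega> unfolding Sf_def by (simp add: sum_nonneg)
  have condk: "AE \<omega> in M. N \<omega> \<le> ennreal (\<eta>\<^sup>2 / 4 * Sf \<omega> + c)"
    using cC unfolding condC_def N_def Sf_def c_def e_def Gy_def R_def by simp
  have Jfact: "AE \<omega> in M. ennreal (Sf \<omega>) \<le> nn_cond_exp M (Fk k) (\<lambda>\<omega>. ennreal ((norm (R \<omega>))\<^sup>2)) \<omega>"
  proof -
    have fe: "(\<lambda>\<omega>. \<Sum>i\<in>Basis. ennreal ((R \<omega> \<bullet> i)\<^sup>2)) = (\<lambda>\<omega>. ennreal ((norm (R \<omega>))\<^sup>2))"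
      by (rule ext) (simp add: norm2_basis_sum[of "R _"])
    have "AE \<omega> in M. \<forall>i\<in>Basis. ennreal ((real_cond_exp M (Fk k) (\<lambda>\<omega>. R \<omega> \<bullet> i) \<omega>)\<^sup>2)
              \<le> nn_cond_exp M (Fk k) (\<lambda>\<omega>. ennreal ((R \<omega> \<bullet> i)\<^sup>2)) \<omega>"
      by (intro AE_finite_allI finite_Basis S.cond_jensen_sq iRi P.finite_measure_axioms)
    moreover have "AE \<omega> in M. nn_cond_exp M (Fk k) (\<lambda>\<omega>. \<Sum>i\<in>Basis. ennreal ((R \<omega> \<bullet> i)\<^sup>2)) \<omega>
          = (\<Sum>i\<in>Basis. nn_cond_exp M (Fk k) (\<lambda>\<omega>. ennreal ((R \<omega> \<bullet> i)\<^sup>2)) \<omega>)"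
      by (rule S.nn_cond_exp_setsum) auto
    ultimately show ?thesis
    proof eventually_elim
      case (elim \<omega>)
      have "ennreal (Sf \<omega>) = (\<Sum>i\<in>Basis. ennreal ((real_cond_exp M (Fk k) (\<lambda>\<omega>. R \<omega> \<bullet> i) \<omega>)\<^sup>2))"
        unfolding Sf_def by simp
      also have "\<dots> \<le> (\<Sum>i\<in>Basis. nn_cond_exp M (Fk k) (\<lambda>\<omega>. ennreal ((R \<omega> \<bullet> i)\<^sup>2)) \<omega>)"
        using elim(1) by (intro sum_mono) auto
      also have "\<dots> = nn_cond_exp M (Fk k) (\<lambda>\<omega>. ennreal ((norm (R \<omega>))\<^sup>2)) \<omega>"
        using elim(2) fe by simp
      finally show ?case .
    qed
  qed
  have Bfact: "AE \<omega> in M. nn_cond_exp M (Fk k) (\<lambda>\<omega>. ennreal ((norm (R \<omega>))\<^sup>2)) \<omega>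
      \<le> ennreal (2 * (norm (Rb \<omega>))\<^sup>2) + 2 * N \<omega>"
  proof -
    define f1 where "f1 \<omega> = ennreal (2 * (norm (Rb \<omega>))\<^sup>2)" for \<omega>
    define f2 where "f2 \<omega> = ennreal ((norm (e \<omega>))\<^sup>2)" for \<omega>
    have f1F [measurable]: "f1 \<in> borel_measurable (Fk k)" unfolding f1_def by measurable
    have f1M [measurable]: "f1 \<in> borel_measurable M" unfolding f1_def by measurable
    have f2M [measurable]: "f2 \<in> borel_measurable M" unfolding f2_def by measurable
    have "AE \<omega> in M. nn_cond_exp M (Fk k) (\<lambda>\<omega>. ennreal ((norm (R \<omega>))\<^sup>2)) \<omega>
        \<le> nn_cond_exp M (Fk k) (\<lambda>\<omega>. f1 \<omega> + 2 * f2 \<omega>) \<omega>"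
    proof (rule S.nn_cond_exp_mono)
      show "AE \<omega> in M. ennreal ((norm (R \<omega>))\<^sup>2) \<le> f1 \<omega> + 2 * f2 \<omega>"
      proof (intro AE_I2)
        fix \<omega>
        have "ennreal ((norm (R \<omega>))\<^sup>2) \<le> ennreal (2 * (norm (Rb \<omega>))\<^sup>2 + 2 * (norm (e \<omega>))\<^sup>2)"
          using R2 by (intro ennreal_leI) auto
        also have "\<dots> = f1 \<omega> + 2 * f2 \<omega>" unfolding f1_def f2_def
          by (simp add: ennreal_plus ennreal_mult)
        finally show "ennreal ((norm (R \<omega>))\<^sup>2) \<le> f1 \<omega> + 2 * f2 \<omega>" .
      qed
    qed measurable
    moreover have "AE \<omega> in M. nn_cond_exp M (Fk k) f1 \<omega> + nn_cond_exp M (Fk k) (\<lambda>\<omega>. 2 * f2 \<omega>) \<omega>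
        = nn_cond_exp M (Fk k) (\<lambda>\<omega>. f1 \<omega> + 2 * f2 \<omega>) \<omega>"
      by (rule S.nn_cond_exp_sum) measurable
    moreover have "AE \<omega> in M. f1 \<omega> = nn_cond_exp M (Fk k) f1 \<omega>"
      by (rule S.nn_cond_exp_F_meas) measurable
    moreover have "AE \<omega> in M. (\<lambda>_. 2) \<omega> * nn_cond_exp M (Fk k) f2 \<omega> = nn_cond_exp M (Fk k) (\<lambda>\<omega>. (\<lambda>_. 2) \<omega> * f2 \<omega>) \<omega>"
      by (rule S.nn_cond_exp_prod) measurable
    ultimately show ?thesis unfolding N_def f1_def[symmetric] f2_def[symmetric]
      by eventually_elim simp
  qed
  have Nb: "AE \<omega> in M. N \<omega> \<le> ennreal ((norm (Rb \<omega>))\<^sup>2 + 2 * c)"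
    using condk Jfact Bfact
  proof eventually_elim
    case (elim \<omega>)
    have "N \<omega> < \<infinity>" using elim(1) by (rule le_less_trans) simp
    then have Nfin: "N \<omega> \<noteq> \<infinity>" by simp
    define n where "n = enn2real (N \<omega>)"
    have Nn: "N \<omega> = ennreal n" and n0: "n \<ge> 0" unfolding n_def using Nfin by (auto simp: ennreal_enn2real_if)
    have "ennreal (Sf \<omega>) \<le> ennreal (2 * (norm (Rb \<omega>))\<^sup>2 + 2 * n)"
      using elim(2) elim(3) Nn n0 by (simp add: ennreal_plus ennreal_mult)
    moreover have "0 \<le> 2 * (norm (Rb \<omega>))\<^sup>2 + 2 * n" using n0 by simp
    ultimately have s1: "Sf \<omega> \<le> 2 * (norm (Rb \<omega>))\<^sup>2 + 2 * n" by simp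
    have s2: "n \<le> \<eta>\<^sup>2 / 4 * Sf \<omega> + c"
    proof -
      have "0 \<le> \<eta>\<^sup>2 / 4 * Sf \<omega> + c" using Sf0[of \<omega>] c0 by simp
      moreover have "ennreal n \<le> ennreal (\<eta>\<^sup>2 / 4 * Sf \<omega> + c)" using elim(1) Nn by simp
      ultimately show ?thesis by simp
    qed
    have e2: "\<eta>\<^sup>2 \<le> 1" using eta by (simp add: power_le_one)
    have "\<eta>\<^sup>2 / 4 * Sf \<omega> \<le> \<eta>\<^sup>2 / 4 * (2 * (norm (Rb \<omega>))\<^sup>2 + 2 * n)"
      using s1 by (intro mult_left_mono) auto
    also have "\<dots> = \<eta>\<^sup>2 / 2 * (norm (Rb \<omega>))\<^sup>2 + \<eta>\<^sup>2 / 2 * n" by (simp add: algebra_simps)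
    also have "\<dots> \<le> 1 / 2 * (norm (Rb \<omega>))\<^sup>2 + 1 / 2 * n"
      using e2 n0 by (intro add_mono mult_right_mono) auto
    finally have "n \<le> (norm (Rb \<omega>))\<^sup>2 + 2 * c" using s2 by linarith
    then show ?case using Nn by (simp add: ennreal_leI)
  qed
  have ie2: "integrable M (\<lambda>\<omega>. (norm (e \<omega>))\<^sup>2)"
  proof (rule integrableI_bounded)
    show "(\<lambda>\<omega>. (norm (e \<omega>))\<^sup>2) \<in> borel_measurable M" by measurable
    have "(\<integral>\<^sup>+\<omega>. ennreal (norm ((norm (e \<omega>))\<^sup>2)) \<partial>M) = (\<integral>\<^sup>+\<omega>. N \<omega> \<partial>M)"
      unfolding N_def by (subst S.nn_integral_nn_cond_exp) auto
    also have "\<dots> \<le> (\<integral>\<^sup>+\<omega>. ennreal ((norm (Rb \<omega>))\<^sup>2 + 2 * c) \<partial>M)"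
      by (rule nn_integral_mono_AE[OF Nb])
    also have "\<dots> = ennreal (\<integral>\<omega>. (norm (Rb \<omega>))\<^sup>2 + 2 * c \<partial>M)"
      by (rule nn_integral_eq_integral) (use P.sqi_int2[OF Rbsq] c0 in auto)
    also have "\<dots> < \<infinity>" by simp
    finally show "(\<integral>\<^sup>+\<omega>. ennreal (norm ((norm (e \<omega>))\<^sup>2)) \<partial>M) < \<infinity>" .
  qed
  have esq: "sqi M e" unfolding sqi_def using ie2 by simp
  then show "sqi M (\<lambda>\<omega>. g k \<omega> - gradf (Y k \<omega>))" unfolding e_def Gy_def .
  have Rsq: "sqi M R" unfolding sqi_def
  proof
    show "R \<in> borel_measurable M" by measurable
    show "integrable M (\<lambda>\<omega>. (norm (R \<omega>))\<^sup>2)"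
    proof (rule Bochner_Integration.integrable_bound[where f="\<lambda>\<omega>. 2 * (norm (Rb \<omega>))\<^sup>2 + 2 * (norm (e \<omega>))\<^sup>2"])
      show "integrable M (\<lambda>\<omega>. 2 * (norm (Rb \<omega>))\<^sup>2 + 2 * (norm (e \<omega>))\<^sup>2)"
        using P.sqi_int2[OF Rbsq] ie2 by auto
    qed (use R2 in auto)
  qed
  then show "sqi M (\<lambda>\<omega>. Rit h D (\<lambda>_. \<alpha>) b x0 g k \<omega>)" unfolding R_def .
  have "ennreal (\<integral>\<omega>. (norm (e \<omega>))\<^sup>2 \<partial>M) = (\<integral>\<^sup>+\<omega>. ennreal ((norm (e \<omega>))\<^sup>2) \<partial>M)"
    by (rule nn_integral_eq_integral[symmetric, OF ie2]) simp
  also have "\<dots> = (\<integral>\<^sup>+\<omega>. N \<omega> \<partial>M)"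
    unfolding N_def by (subst S.nn_integral_nn_cond_exp) auto
  also have "\<dots> \<le> (\<integral>\<^sup>+\<omega>. ennreal (\<eta>\<^sup>2 / 4) * ennreal (Sf \<omega>) + ennreal c \<partial>M)"
  proof (rule nn_integral_mono_AE)
    show "AE \<omega> in M. N \<omega> \<le> ennreal (\<eta>\<^sup>2 / 4) * ennreal (Sf \<omega>) + ennreal c"
      using condk
    proof eventually_elim
      case (elim \<omega>)
      have "ennreal (\<eta>\<^sup>2 / 4 * Sf \<omega> + c) = ennreal (\<eta>\<^sup>2 / 4 * Sf \<omega>) + ennreal c"
        by (rule ennreal_plus) (use Sf0 c0 in auto)
      also have "ennreal (\<eta>\<^sup>2 / 4 * Sf \<omega>) = ennreal (\<eta>\<^sup>2 / 4) * ennreal (Sf \<omega>)"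
        by (rule ennreal_mult') simp
      finally show ?case using elim by simp
    qed
  qed
  also have "\<dots> = ennreal (\<eta>\<^sup>2 / 4) * (\<integral>\<^sup>+\<omega>. ennreal (Sf \<omega>) \<partial>M) + ennreal c"
    by (subst nn_integral_add) (auto simp: nn_integral_cmult P.emeasure_space_1)
  also have "\<dots> \<le> ennreal (\<eta>\<^sup>2 / 4) * (\<integral>\<^sup>+\<omega>. ennreal ((norm (R \<omega>))\<^sup>2) \<partial>M) + ennreal c"
  proof -
    have "(\<integral>\<^sup>+\<omega>. ennreal (Sf \<omega>) \<partial>M) \<le> (\<integral>\<^sup>+\<omega>. nn_cond_exp M (Fk k) (\<lambda>\<omega>. ennreal ((norm (R \<omega>))\<^sup>2)) \<omega> \<partial>M)"
      by (rule nn_integral_mono_AE[OF Jfact])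
    also have "\<dots> = (\<integral>\<^sup>+\<omega>. ennreal ((norm (R \<omega>))\<^sup>2) \<partial>M)"
      by (rule S.nn_integral_nn_cond_exp) measurable
    finally show ?thesis by (intro add_mono mult_left_mono) auto
  qed
  also have "(\<integral>\<^sup>+\<omega>. ennreal ((norm (R \<omega>))\<^sup>2) \<partial>M) = ennreal (\<integral>\<omega>. (norm (R \<omega>))\<^sup>2 \<partial>M)"
    by (rule nn_integral_eq_integral[OF P.sqi_int2[OF Rsq]]) simp
  also have "ennreal (\<eta>\<^sup>2 / 4) * ennreal (\<integral>\<omega>. (norm (R \<omega>))\<^sup>2 \<partial>M) + ennreal c
      = ennreal (\<eta>\<^sup>2 / 4 * (\<integral>\<omega>. (norm (R \<omega>))\<^sup>2 \<partial>M) + c)"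
  proof -
    have "ennreal (\<eta>\<^sup>2 / 4 * (\<integral>\<omega>. (norm (R \<omega>))\<^sup>2 \<partial>M)) = ennreal (\<eta>\<^sup>2 / 4) * ennreal (\<integral>\<omega>. (norm (R \<omega>))\<^sup>2 \<partial>M)"
      by (rule ennreal_mult') simp
    moreover have "ennreal (\<eta>\<^sup>2 / 4 * (\<integral>\<omega>. (norm (R \<omega>))\<^sup>2 \<partial>M) + c) = ennreal (\<eta>\<^sup>2 / 4 * (\<integral>\<omega>. (norm (R \<omega>))\<^sup>2 \<partial>M)) + ennreal c"
      by (rule ennreal_plus) (use c0 in \<open>auto intro!: integral_nonneg_AE\<close>)
    ultimately show ?thesis by simp
  qed
  finally have "ennreal (\<integral>\<omega>. (norm (e \<omega>))\<^sup>2 \<partial>M) \<le> ennreal (\<eta>\<^sup>2 / 4 * (\<integral>\<omega>. (norm (R \<omega>))\<^sup>2 \<partial>M) + c)" .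
  then have "(\<integral>\<omega>. (norm (e \<omega>))\<^sup>2 \<partial>M) \<le> \<eta>\<^sup>2 / 4 * (\<integral>\<omega>. (norm (R \<omega>))\<^sup>2 \<partial>M) + c"
    using c0 by (subst (asm) ennreal_le_iff) (auto intro!: add_nonneg_nonneg mult_nonneg_nonneg integral_nonneg_AE)
  then show "(\<integral>\<omega>. (norm (g k \<omega> - gradf (Y k \<omega>)))\<^sup>2 \<partial>M)
       \<le> \<eta>\<^sup>2 / 4 * (\<integral>\<omega>. (norm (Rit h D (\<lambda>_. \<alpha>) b x0 g k \<omega>))\<^sup>2 \<partial>M) + \<iota>0\<^sup>2 * (\<delta> k)\<^sup>2"
    unfolding e_def Gy_def R_def c_def .
qed

end


context apg
begin

lemma f_cont: "continuous_on UNIV f"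
  by (rule has_derivative_continuous_on) (use fg in auto)

lemma f_meas [measurable]: "f \<in> borel_measurable borel"
  by (rule borel_measurable_continuous_onI[OF f_cont])

lemma h_comp_meas:
  assumes Z: "Z \<in> borel_measurable M" and ZD: "\<And>\<omega>. Z \<omega> \<in> D"
  shows "(\<lambda>\<omega>. h (Z \<omega>)) \<in> borel_measurable M"
  unfolding borel_measurable_iff_le
proof
  fix t :: real
  define C where "C = (\<lambda>x. (x, t)) -` {(x, t). x \<in> D \<and> h x \<le> t}"
  have "closed C" unfolding C_def
    by (rule continuous_closed_vimage[OF epi_closed]) (intro continuous_intros)
  then have "C \<in> sets borel" by simp
  then have "Z -` C \<inter> space M \<in> sets M" using Z measurable_sets by blast
  moreover have "{w \<in> space M. h (Z w) \<le> t} = Z -` C \<inter> space M" unfolding C_def using ZD by auto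
  ultimately show "{w \<in> space M. h (Z w) \<le> t} \<in> sets M" by simp
qed

lemma Gy_sq:
  assumes Ysq: "sqi M (Y k)"
  shows "sqi M (\<lambda>\<omega>. gradf (Y k \<omega>))"
proof -
  interpret P: prob_space M by (rule M_prob)
  show ?thesis
    by (rule P.sqi_bound[OF Ysq, of _ L "norm (gradf 0)"]) (use L_pos gradf_bound in auto)
qed

lemma sq_all: "sqi M (X k) \<and> sqi M (Y k)"
proof (induction k)
  case 0
  then show ?case by (simp add: X0 Y0 prob_space.sqi_const[OF M_prob])
next
  case (Suc k)
  interpret P: prob_space M by (rule M_prob)
  have Ysq: "sqi M (Y k)" and Xsq: "sqi M (X k)" using Suc by auto
  have gsq: "sqi M (g k)"
    using P.sqi_add[OF e_bounds(1)[of k, OF Ysq] Gy_sq[of k, OF Ysq]] by simp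
  have zsq: "sqi M (\<lambda>\<omega>. Y k \<omega> - \<alpha> *\<^sub>R g k \<omega>)" by (intro P.sqi_diff P.sqi_scale Ysq gsq)
  have XS: "sqi M (X (Suc k))"
  proof (rule P.sqi_bound[OF zsq X_M[of "Suc k"], of 1 "norm (prox \<alpha> h D 0)"])
    fix \<omega> show "norm (X (Suc k) \<omega>) \<le> norm (prox \<alpha> h D 0) + 1 * norm (Y k \<omega> - \<alpha> *\<^sub>R g k \<omega>)"
      unfolding XSuc using prox_bound by simp
  qed simp
  have "sqi M (\<lambda>\<omega>. X (Suc k) \<omega> + b (Suc k) *\<^sub>R (X (Suc k) \<omega> - X k \<omega>))"
    by (intro P.sqi_add P.sqi_scale P.sqi_diff XS Xsq)
  then have "sqi M (Y (Suc k))" unfolding YSuc[abs_def] .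
  with XS show ?case by simp
qed

lemma X_sq: "sqi M (X k)" and Y_sq: "sqi M (Y k)" using sq_all by auto

lemma g_sq: "sqi M (g k)"
  using prob_space.sqi_add[OF M_prob e_bounds(1)[of k, OF Y_sq] Gy_sq[of k, OF Y_sq]] by simp

lemma cross_zero:
  assumes WF: "W \<in> borel_measurable (Fk k)" and Wsq: "sqi M W"
  shows "(\<integral>\<omega>. (g k \<omega> - gradf (Y k \<omega>)) \<bullet> W \<omega> \<partial>M) = 0"
proof -
  interpret P: prob_space M by (rule M_prob)
  interpret S: sigma_finite_subalgebra M "Fk k" by (rule sfs)
  have [measurable]: "g k \<in> borel_measurable M" by (rule g_meas)
  have WM [measurable]: "W \<in> borel_measurable M" by (rule FtoM[OF WF])
  have comp: "(\<integral>\<omega>. (W \<omega> \<bullet> i) * ((g k \<omega> - gradf (Y k \<omega>)) \<bullet> i) \<partial>M) = 0" if i: "i \<in> Basis" for i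
  proof -
    have Wisq: "sqi M (\<lambda>\<omega>. (W \<omega> \<bullet> i) *\<^sub>R i)"
    proof (rule P.sqi_bound[OF Wsq, of _ 1 0])
      show "(\<lambda>\<omega>. (W \<omega> \<bullet> i) *\<^sub>R i) \<in> borel_measurable M" by measurable
      fix \<omega> show "norm ((W \<omega> \<bullet> i) *\<^sub>R i) \<le> 0 + 1 * norm (W \<omega>)"
        using i by (simp add: Basis_le_norm)
    qed simp
    have i1: "integrable M (\<lambda>\<omega>. (W \<omega> \<bullet> i) * (g k \<omega> \<bullet> i))"
      using P.sqi_inner[OF Wisq g_sq[of k]] by (simp add: inner_commute[of i])
    have i2: "integrable M (\<lambda>\<omega>. (W \<omega> \<bullet> i) * (gradf (Y k \<omega>) \<bullet> i))"
      using P.sqi_inner[OF Wisq Gy_sq[OF Y_sq[of k]]] by (simp add: inner_commute[of i])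
    have WiF [measurable]: "(\<lambda>\<omega>. W \<omega> \<bullet> i) \<in> borel_measurable (Fk k)" using WF by measurable
    have "(\<integral>\<omega>. (W \<omega> \<bullet> i) * (g k \<omega> \<bullet> i) \<partial>M) = (\<integral>\<omega>. (W \<omega> \<bullet> i) * real_cond_exp M (Fk k) (\<lambda>\<omega>. g k \<omega> \<bullet> i) \<omega> \<partial>M)"
      by (rule S.real_cond_exp_intg(2)[symmetric, OF i1 WiF]) measurable
    also have "\<dots> = (\<integral>\<omega>. (W \<omega> \<bullet> i) * (gradf (Y k \<omega>) \<bullet> i) \<partial>M)"
    proof (rule integral_cong_AE)
      show "AE \<omega> in M. (W \<omega> \<bullet> i) * real_cond_exp M (Fk k) (\<lambda>\<omega>. g k \<omega> \<bullet> i) \<omega> = (W \<omega> \<bullet> i) * (gradf (Y k \<omega>) \<bullet> i)"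
      proof -
        have "AE \<omega> in M. real_cond_exp M (Fk k) (\<lambda>\<omega>. g k \<omega> \<bullet> i) \<omega> = gradf (Y k \<omega>) \<bullet> i"
          using unb i unfolding unbiased_def by blast
        then show ?thesis by eventually_elim simp
      qed
    qed measurable
    finally have "(\<integral>\<omega>. (W \<omega> \<bullet> i) * (g k \<omega> \<bullet> i) \<partial>M) = (\<integral>\<omega>. (W \<omega> \<bullet> i) * (gradf (Y k \<omega>) \<bullet> i) \<partial>M)" .
    then show ?thesis using i1 i2 by (simp add: inner_diff_left right_diff_distrib)
  qed
  have "(\<lambda>\<omega>. (g k \<omega> - gradf (Y k \<omega>)) \<bullet> W \<omega>) = (\<lambda>\<omega>. \<Sum>i\<in>Basis. (W \<omega> \<bullet> i) * ((g k \<omega> - gradf (Y k \<omega>)) \<bullet> i))"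
    by (rule ext) (subst euclidean_inner, simp add: mult.commute)
  moreover have "integrable M (\<lambda>\<omega>. (W \<omega> \<bullet> i) * ((g k \<omega> - gradf (Y k \<omega>)) \<bullet> i))" if "i \<in> Basis" for i
  proof -
    have "sqi M (\<lambda>\<omega>. (W \<omega> \<bullet> i) *\<^sub>R i)"
    proof (rule P.sqi_bound[OF Wsq, of _ 1 0])
      show "(\<lambda>\<omega>. (W \<omega> \<bullet> i) *\<^sub>R i) \<in> borel_measurable M" by measurable
      fix \<omega> show "norm ((W \<omega> \<bullet> i) *\<^sub>R i) \<le> 0 + 1 * norm (W \<omega>)"
        using that by (simp add: Basis_le_norm)
    qed simp
    from P.sqi_inner[OF this e_bounds(1)[OF Y_sq[of k]]] show ?thesis by (simp add: inner_commute[of i])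
  qed
  ultimately show ?thesis using comp by (simp add: Bochner_Integration.integral_sum)
qed

end


context apg
begin

abbreviation "Xb k \<omega> \<equiv> prox \<alpha> h D (Y k \<omega> - \<alpha> *\<^sub>R gradf (Y k \<omega>))"

lemma Xb_F: "(\<lambda>\<omega>. Xb k \<omega>) \<in> borel_measurable (Fk k)"
  using Y_F[of k] by measurable

lemma Xb_sq: "sqi M (\<lambda>\<omega>. Xb k \<omega>)"
proof -
  interpret P: prob_space M by (rule M_prob)
  have z: "sqi M (\<lambda>\<omega>. Y k \<omega> - \<alpha> *\<^sub>R gradf (Y k \<omega>))"
    by (rule P.sqi_diff[OF Y_sq P.sqi_scale[OF Gy_sq[OF Y_sq]]])
  have m: "(\<lambda>\<omega>. Xb k \<omega>) \<in> borel_measurable M" by (rule FtoM[OF Xb_F])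
  show ?thesis
  proof (rule P.sqi_bound[OF z m, of 1 "norm (prox \<alpha> h D 0)"])
    fix \<omega> show "norm (Xb k \<omega>) \<le> norm (prox \<alpha> h D 0) + 1 * norm (Y k \<omega> - \<alpha> *\<^sub>R gradf (Y k \<omega>))"
      using prox_bound by simp
  qed simp
qed

lemma one_minus_La: "1 - L * \<alpha> \<ge> \<eta>"
  using alpha_le by (simp add: mult.commute)

lemma pointwise:
  assumes u: "u \<in> D"
  shows "f (X (Suc k) \<omega>) + h (X (Suc k) \<omega>)
    \<le> f u + h u + ((norm (Y k \<omega> - u))\<^sup>2 - (norm (X (Suc k) \<omega> - u))\<^sup>2) / (2 * \<alpha>)
       - (1 - L * \<alpha>) / (2 * \<alpha>) * (norm (Y k \<omega> - X (Suc k) \<omega>))\<^sup>2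
       + \<alpha> * (norm (g k \<omega> - gradf (Y k \<omega>)))\<^sup>2 - (g k \<omega> - gradf (Y k \<omega>)) \<bullet> (Xb k \<omega> - u)"
  unfolding XSuc by (rule step_ineq[OF alpha_pos u cvx])

lemma phi_int: "integrable M (\<lambda>\<omega>. f (X (Suc k) \<omega>) + h (X (Suc k) \<omega>))"
proof -
  interpret P: prob_space M by (rule M_prob)
  define ps where "ps = f xstar + h xstar"
  define B where "B \<omega> = (norm (Y k \<omega> - xstar))\<^sup>2 / (2 * \<alpha>) + \<alpha> * (norm (g k \<omega> - gradf (Y k \<omega>)))\<^sup>2
      + \<bar>(g k \<omega> - gradf (Y k \<omega>)) \<bullet> (Xb k \<omega> - xstar)\<bar>" for \<omega>
  have esq: "sqi M (\<lambda>\<omega>. g k \<omega> - gradf (Y k \<omega>))" by (rule e_bounds(1)[OF Y_sq])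
  have i1: "integrable M (\<lambda>\<omega>. (norm (Y k \<omega> - xstar))\<^sup>2)"
    by (rule P.sqi_int2[OF P.sqi_diff[OF Y_sq P.sqi_const]])
  have i2: "integrable M (\<lambda>\<omega>. (norm (g k \<omega> - gradf (Y k \<omega>)))\<^sup>2)" by (rule P.sqi_int2[OF esq])
  have i3: "integrable M (\<lambda>\<omega>. (g k \<omega> - gradf (Y k \<omega>)) \<bullet> (Xb k \<omega> - xstar))"
    by (rule P.sqi_inner[OF esq P.sqi_diff[OF Xb_sq P.sqi_const]])
  have iB: "integrable M B" unfolding B_def using i1 i2 i3 by auto
  have meas: "(\<lambda>\<omega>. f (X (Suc k) \<omega>) + h (X (Suc k) \<omega>)) \<in> borel_measurable M"
    using h_comp_meas[OF X_M X_D] by measurable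
  show ?thesis
  proof (rule Bochner_Integration.integrable_bound[where f="\<lambda>\<omega>. \<bar>ps\<bar> + B \<omega>"])
    show "integrable M (\<lambda>\<omega>. \<bar>ps\<bar> + B \<omega>)" using iB by simp
    show "AE \<omega> in M. norm (f (X (Suc k) \<omega>) + h (X (Suc k) \<omega>)) \<le> norm (\<bar>ps\<bar> + B \<omega>)"
    proof (intro AE_I2)
      fix \<omega>
      have lo: "ps \<le> f (X (Suc k) \<omega>) + h (X (Suc k) \<omega>)" unfolding ps_def by (rule xs_min[OF X_D])
      have p: "f (X (Suc k) \<omega>) + h (X (Suc k) \<omega>)
        \<le> ps + ((norm (Y k \<omega> - xstar))\<^sup>2 - (norm (X (Suc k) \<omega> - xstar))\<^sup>2) / (2 * \<alpha>)
       - (1 - L * \<alpha>) / (2 * \<alpha>) * (norm (Y k \<omega> - X (Suc k) \<omega>))\<^sup>2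
       + \<alpha> * (norm (g k \<omega> - gradf (Y k \<omega>)))\<^sup>2 - (g k \<omega> - gradf (Y k \<omega>)) \<bullet> (Xb k \<omega> - xstar)"
        unfolding ps_def by (rule pointwise[OF xs_dom])
      have t1: "0 \<le> (1 - L * \<alpha>) / (2 * \<alpha>) * (norm (Y k \<omega> - X (Suc k) \<omega>))\<^sup>2"
        using one_minus_La eta alpha_pos by simp
      have t2: "((norm (Y k \<omega> - xstar))\<^sup>2 - (norm (X (Suc k) \<omega> - xstar))\<^sup>2) / (2 * \<alpha>) \<le> (norm (Y k \<omega> - xstar))\<^sup>2 / (2 * \<alpha>)"
        using alpha_pos by (simp add: divide_right_mono)
      have t3: "- ((g k \<omega> - gradf (Y k \<omega>)) \<bullet> (Xb k \<omega> - xstar)) \<le> \<bar>(g k \<omega> - gradf (Y k \<omega>)) \<bullet> (Xb k \<omega> - xstar)\<bar>" by simp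
      have up: "f (X (Suc k) \<omega>) + h (X (Suc k) \<omega>) \<le> ps + B \<omega>" using p t1 t2 t3 unfolding B_def by linarith
      have B0: "B \<omega> \<ge> 0" unfolding B_def using alpha_pos by simp
      show "norm (f (X (Suc k) \<omega>) + h (X (Suc k) \<omega>)) \<le> norm (\<bar>ps\<bar> + B \<omega>)"
        using lo up B0 by simp
    qed
  qed (rule meas)
qed

end


context apg
begin

lemma step_exp:
  assumes UF: "U \<in> borel_measurable (Fk k)" and Usq: "sqi M U" and UD: "\<And>\<omega>. U \<omega> \<in> D"
    and iPhi: "integrable M Phi" and Phi: "\<And>\<omega>. f (U \<omega>) + h (U \<omega>) \<le> Phi \<omega>"
  shows "(\<integral>\<omega>. f (X (Suc k) \<omega>) + h (X (Suc k) \<omega>) \<partial>M)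
    \<le> (\<integral>\<omega>. Phi \<omega> \<partial>M) + ((\<integral>\<omega>. (norm (Y k \<omega> - U \<omega>))\<^sup>2 \<partial>M) - (\<integral>\<omega>. (norm (X (Suc k) \<omega> - U \<omega>))\<^sup>2 \<partial>M)) / (2 * \<alpha>)
       + \<alpha> * (\<iota>0\<^sup>2 * (\<delta> k)\<^sup>2)"
proof -
  interpret P: prob_space M by (rule M_prob)
  define \<kappa> where "\<kappa> = (1 - L * \<alpha>) / (2 * \<alpha>)"
  define c where "c = \<iota>0\<^sup>2 * (\<delta> k)\<^sup>2"
  define A2 where "A2 \<omega> = (norm (Y k \<omega> - U \<omega>))\<^sup>2" for \<omega>
  define A3 where "A3 \<omega> = (norm (X (Suc k) \<omega> - U \<omega>))\<^sup>2" for \<omega>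
  define A4 where "A4 \<omega> = (norm (Y k \<omega> - X (Suc k) \<omega>))\<^sup>2" for \<omega>
  define A5 where "A5 \<omega> = (norm (g k \<omega> - gradf (Y k \<omega>)))\<^sup>2" for \<omega>
  define A6 where "A6 \<omega> = (g k \<omega> - gradf (Y k \<omega>)) \<bullet> (Xb k \<omega> - U \<omega>)" for \<omega>
  have esq: "sqi M (\<lambda>\<omega>. g k \<omega> - gradf (Y k \<omega>))" by (rule e_bounds(1)[OF Y_sq])
  have i2: "integrable M A2" unfolding A2_def by (rule P.sqi_int2[OF P.sqi_diff[OF Y_sq Usq]])
  have i3: "integrable M A3" unfolding A3_def by (rule P.sqi_int2[OF P.sqi_diff[OF X_sq Usq]])
  have i4: "integrable M A4" unfolding A4_def by (rule P.sqi_int2[OF P.sqi_diff[OF Y_sq X_sq]])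
  have i5: "integrable M A5" unfolding A5_def by (rule P.sqi_int2[OF esq])
  have Wsq: "sqi M (\<lambda>\<omega>. Xb k \<omega> - U \<omega>)" by (rule P.sqi_diff[OF Xb_sq Usq])
  have i6: "integrable M A6" unfolding A6_def by (rule P.sqi_inner[OF esq Wsq])
  have WF: "(\<lambda>\<omega>. Xb k \<omega> - U \<omega>) \<in> borel_measurable (Fk k)" using Xb_F[of k] UF by measurable
  have I6: "(\<integral>\<omega>. A6 \<omega> \<partial>M) = 0" unfolding A6_def by (rule cross_zero[OF WF Wsq])
  have iphi: "integrable M (\<lambda>\<omega>. f (X (Suc k) \<omega>) + h (X (Suc k) \<omega>))" by (rule phi_int)
  have "(\<integral>\<omega>. f (X (Suc k) \<omega>) + h (X (Suc k) \<omega>) \<partial>M)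
      \<le> (\<integral>\<omega>. Phi \<omega> + (A2 \<omega> - A3 \<omega>) / (2 * \<alpha>) - \<kappa> * A4 \<omega> + \<alpha> * A5 \<omega> - A6 \<omega> \<partial>M)"
  proof (rule integral_mono[OF iphi])
    show "integrable M (\<lambda>\<omega>. Phi \<omega> + (A2 \<omega> - A3 \<omega>) / (2 * \<alpha>) - \<kappa> * A4 \<omega> + \<alpha> * A5 \<omega> - A6 \<omega>)"
      using iPhi i2 i3 i4 i5 i6 by auto
    fix \<omega>
    show "f (X (Suc k) \<omega>) + h (X (Suc k) \<omega>) \<le> Phi \<omega> + (A2 \<omega> - A3 \<omega>) / (2 * \<alpha>) - \<kappa> * A4 \<omega> + \<alpha> * A5 \<omega> - A6 \<omega>"
      using pointwise[OF UD[of \<omega>], of k \<omega>] Phi[of \<omega>] unfolding A2_def A3_def A4_def A5_def A6_def \<kappa>_def by linarith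
  qed
  also have "\<dots> = (\<integral>\<omega>. Phi \<omega> \<partial>M) + ((\<integral>\<omega>. A2 \<omega> \<partial>M) - (\<integral>\<omega>. A3 \<omega> \<partial>M)) / (2 * \<alpha>) - \<kappa> * (\<integral>\<omega>. A4 \<omega> \<partial>M)
      + \<alpha> * (\<integral>\<omega>. A5 \<omega> \<partial>M) - (\<integral>\<omega>. A6 \<omega> \<partial>M)"
    using iPhi i2 i3 i4 i5 i6 by (simp add: diff_divide_distrib)
  also have "\<dots> \<le> (\<integral>\<omega>. Phi \<omega> \<partial>M) + ((\<integral>\<omega>. A2 \<omega> \<partial>M) - (\<integral>\<omega>. A3 \<omega> \<partial>M)) / (2 * \<alpha>) + \<alpha> * c"
  proof -
    have R4: "(\<integral>\<omega>. (norm (Rit h D (\<lambda>_. \<alpha>) b x0 g k \<omega>))\<^sup>2 \<partial>M) = (\<integral>\<omega>. A4 \<omega> \<partial>M) / \<alpha>\<^sup>2"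
    proof -
      have "(norm (Rit h D (\<lambda>_. \<alpha>) b x0 g k \<omega>))\<^sup>2 = A4 \<omega> / \<alpha>\<^sup>2" for \<omega>
        unfolding Rit_def A4_def using alpha_pos by (simp add: power_divide power_mult_distrib)
      then show ?thesis by simp
    qed
    have e5: "(\<integral>\<omega>. A5 \<omega> \<partial>M) \<le> \<eta>\<^sup>2 / 4 * ((\<integral>\<omega>. A4 \<omega> \<partial>M) / \<alpha>\<^sup>2) + c"
      using e_bounds(3)[OF Y_sq[of k]] unfolding A5_def[symmetric] R4 c_def .
    have I40: "(\<integral>\<omega>. A4 \<omega> \<partial>M) \<ge> 0" unfolding A4_def by (rule integral_nonneg_AE) simp
    have "\<alpha> * (\<integral>\<omega>. A5 \<omega> \<partial>M) \<le> \<alpha> * (\<eta>\<^sup>2 / 4 * ((\<integral>\<omega>. A4 \<omega> \<partial>M) / \<alpha>\<^sup>2) + c)"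
      using e5 alpha_pos by (intro mult_left_mono) auto
    also have "\<dots> = \<eta>\<^sup>2 / (4 * \<alpha>) * (\<integral>\<omega>. A4 \<omega> \<partial>M) + \<alpha> * c"
      using alpha_pos by (simp add: field_simps power2_eq_square)
    finally have a5: "\<alpha> * (\<integral>\<omega>. A5 \<omega> \<partial>M) \<le> \<eta>\<^sup>2 / (4 * \<alpha>) * (\<integral>\<omega>. A4 \<omega> \<partial>M) + \<alpha> * c" .
    have "\<eta>\<^sup>2 / (4 * \<alpha>) \<le> \<kappa>"
    proof -
      have "\<eta>\<^sup>2 \<le> 2 * \<eta>" using eta by (simp add: power2_eq_square mult_right_mono)
      also have "\<dots> \<le> 2 * (1 - L * \<alpha>)" using one_minus_La by simp
      finally have "\<eta>\<^sup>2 \<le> 2 * (1 - L * \<alpha>)" .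
      then show ?thesis unfolding \<kappa>_def using alpha_pos by (simp add: field_simps)
    qed
    then have "\<eta>\<^sup>2 / (4 * \<alpha>) * (\<integral>\<omega>. A4 \<omega> \<partial>M) \<le> \<kappa> * (\<integral>\<omega>. A4 \<omega> \<partial>M)"
      using I40 by (rule mult_right_mono)
    with a5 I6 show ?thesis by linarith
  qed
  finally show ?thesis unfolding A2_def A3_def c_def .
qed

end


context apg
begin

abbreviation "phis \<equiv> f xstar + h xstar"

lemma int_const_M: "(\<integral>\<omega>. c \<partial>M) = (c::real)"
  using prob_space.prob_space[OF M_prob] by (simp add: measure_def)

lemma meas_sp [simp]: "measure M (space M) = 1"
  using prob_space.prob_space[OF M_prob] by simp

lemma iconst [simp]: "integrable M (\<lambda>_. c::real)"
  using prob_space.finite_measure[OF M_prob] by (rule finite_measure.integrable_const)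

lemma phi_ge: "f (X (Suc k) \<omega>) + h (X (Suc k) \<omega>) \<ge> phis"
  by (rule xs_min[OF X_D])

lemma Ephi_ge: "(\<integral>\<omega>. f (X (Suc k) \<omega>) + h (X (Suc k) \<omega>) \<partial>M) \<ge> phis"
proof -
  have "(\<integral>\<omega>. phis \<partial>M) \<le> (\<integral>\<omega>. f (X (Suc k) \<omega>) + h (X (Suc k) \<omega>) \<partial>M)"
    by (rule integral_mono[OF _ phi_int]) (auto simp: phi_ge)
  then show ?thesis by (simp add: int_const_M)
qed

lemma nn_phi_eq: "(\<integral>\<^sup>+\<omega>. ennreal (f (X (Suc k) \<omega>) + h (X (Suc k) \<omega>) - phis) \<partial>M)
   = ennreal ((\<integral>\<omega>. f (X (Suc k) \<omega>) + h (X (Suc k) \<omega>) \<partial>M) - phis)"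
proof -
  have "(\<integral>\<^sup>+\<omega>. ennreal (f (X (Suc k) \<omega>) + h (X (Suc k) \<omega>) - phis) \<partial>M)
      = ennreal (\<integral>\<omega>. f (X (Suc k) \<omega>) + h (X (Suc k) \<omega>) - phis \<partial>M)"
    by (rule nn_integral_eq_integral) (use phi_int[of k] phi_ge in auto)
  also have "(\<integral>\<omega>. f (X (Suc k) \<omega>) + h (X (Suc k) \<omega>) - phis \<partial>M) = (\<integral>\<omega>. f (X (Suc k) \<omega>) + h (X (Suc k) \<omega>) \<partial>M) - phis"
    using phi_int[of k] by (simp add: int_const_M)
  finally show ?thesis .
qed

lemma optI_sum:
  assumes b0: "\<And>k. b k = 0"
  shows "(\<Sum>k<K. (\<integral>\<omega>. f (X (Suc k) \<omega>) + h (X (Suc k) \<omega>) \<partial>M) - phis)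
     \<le> (norm (x0 - xstar))\<^sup>2 / (2 * \<alpha>) - (\<integral>\<omega>. (norm (X K \<omega> - xstar))\<^sup>2 \<partial>M) / (2 * \<alpha>)
        + \<alpha> * (\<Sum>k<K. \<iota>0\<^sup>2 * (\<delta> k)\<^sup>2)"
proof -
  have YX: "Y k \<omega> = X k \<omega>" for k \<omega>
    by (cases k) (simp_all add: X0 Y0 YSuc b0)
  have st: "(\<integral>\<omega>. f (X (Suc k) \<omega>) + h (X (Suc k) \<omega>) \<partial>M) - phis
      \<le> ((\<integral>\<omega>. (norm (X k \<omega> - xstar))\<^sup>2 \<partial>M) - (\<integral>\<omega>. (norm (X (Suc k) \<omega> - xstar))\<^sup>2 \<partial>M)) / (2 * \<alpha>)
        + \<alpha> * (\<iota>0\<^sup>2 * (\<delta> k)\<^sup>2)" for k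
  proof -
    have "(\<integral>\<omega>. f (X (Suc k) \<omega>) + h (X (Suc k) \<omega>) \<partial>M)
      \<le> (\<integral>\<omega>. phis \<partial>M) + ((\<integral>\<omega>. (norm (Y k \<omega> - xstar))\<^sup>2 \<partial>M) - (\<integral>\<omega>. (norm (X (Suc k) \<omega> - xstar))\<^sup>2 \<partial>M)) / (2 * \<alpha>)
       + \<alpha> * (\<iota>0\<^sup>2 * (\<delta> k)\<^sup>2)"
      by (rule step_exp[where U="\<lambda>_. xstar"]) (auto simp: prob_space.sqi_const[OF M_prob] xs_dom)
    then show ?thesis by (simp add: YX int_const_M)
  qed
  show ?thesis
  proof (induction K)
    case 0
    then show ?case by (simp add: X0 int_const_M)
  next
    case (Suc K)
    have a: "(\<Sum>k<Suc K. (\<integral>\<omega>. f (X (Suc k) \<omega>) + h (X (Suc k) \<omega>) \<partial>M) - phis)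
      = (\<Sum>k<K. (\<integral>\<omega>. f (X (Suc k) \<omega>) + h (X (Suc k) \<omega>) \<partial>M) - phis) + ((\<integral>\<omega>. f (X (Suc K) \<omega>) + h (X (Suc K) \<omega>) \<partial>M) - phis)"
      by simp
    have b: "\<alpha> * (\<Sum>k<Suc K. \<iota>0\<^sup>2 * (\<delta> k)\<^sup>2) = \<alpha> * (\<Sum>k<K. \<iota>0\<^sup>2 * (\<delta> k)\<^sup>2) + \<alpha> * (\<iota>0\<^sup>2 * (\<delta> K)\<^sup>2)"
      by (simp add: distrib_left)
    have c: "((\<integral>\<omega>. (norm (X K \<omega> - xstar))\<^sup>2 \<partial>M) - (\<integral>\<omega>. (norm (X (Suc K) \<omega> - xstar))\<^sup>2 \<partial>M)) / (2 * \<alpha>)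
      = (\<integral>\<omega>. (norm (X K \<omega> - xstar))\<^sup>2 \<partial>M) / (2 * \<alpha>) - (\<integral>\<omega>. (norm (X (Suc K) \<omega> - xstar))\<^sup>2 \<partial>M) / (2 * \<alpha>)"
      by (rule diff_divide_distrib)
    show ?case using Suc.IH st[of K] a b c by linarith
  qed
qed

lemma optI:
  assumes b0: "\<And>k. b k = 0" and sm: "summable (\<lambda>k. (\<delta> k)\<^sup>2)"
  shows "\<exists>C::real. \<forall>K::nat. K \<ge> 1 \<longrightarrow>
     Min ((\<lambda>k. \<integral>\<^sup>+ \<omega>. ennreal (f (X k \<omega>) + h (X k \<omega>) - phis) \<partial>M) ` {..<K}) \<le> ennreal (C / real K)"
proof -
  define S where "S = (norm (x0 - xstar))\<^sup>2 / (2 * \<alpha>) + \<alpha> * (\<iota>0\<^sup>2 * (\<Sum>k. (\<delta> k)\<^sup>2))"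
  define c0 where "c0 = \<bar>f x0 + h x0 - phis\<bar>"
  define C where "C = 2 * S + c0"
  define d where "d k = (\<integral>\<omega>. f (X (Suc k) \<omega>) + h (X (Suc k) \<omega>) \<partial>M) - phis" for k
  have d0: "d k \<ge> 0" for k unfolding d_def using Ephi_ge[of k] by simp
  have S0: "S \<ge> 0" unfolding S_def using alpha_pos suminf_nonneg[OF sm] by (auto intro!: add_nonneg_nonneg mult_nonneg_nonneg)
  have sumd: "(\<Sum>k<K. d k) \<le> S" for K
  proof -
    have "(\<Sum>k<K. d k) \<le> (norm (x0 - xstar))\<^sup>2 / (2 * \<alpha>) - (\<integral>\<omega>. (norm (X K \<omega> - xstar))\<^sup>2 \<partial>M) / (2 * \<alpha>)
        + \<alpha> * (\<Sum>k<K. \<iota>0\<^sup>2 * (\<delta> k)\<^sup>2)" unfolding d_def by (rule optI_sum[OF b0])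
    also have "\<dots> \<le> (norm (x0 - xstar))\<^sup>2 / (2 * \<alpha>) + \<alpha> * (\<iota>0\<^sup>2 * (\<Sum>k. (\<delta> k)\<^sup>2))"
    proof -
      have "(\<integral>\<omega>. (norm (X K \<omega> - xstar))\<^sup>2 \<partial>M) \<ge> 0" by (rule integral_nonneg_AE) simp
      moreover have "(\<Sum>k<K. \<iota>0\<^sup>2 * (\<delta> k)\<^sup>2) \<le> \<iota>0\<^sup>2 * (\<Sum>k. (\<delta> k)\<^sup>2)"
      proof -
        have "(\<Sum>k<K. (\<delta> k)\<^sup>2) \<le> (\<Sum>k. (\<delta> k)\<^sup>2)" by (rule sum_le_suminf[OF sm]) auto
        then have "\<iota>0\<^sup>2 * (\<Sum>k<K. (\<delta> k)\<^sup>2) \<le> \<iota>0\<^sup>2 * (\<Sum>k. (\<delta> k)\<^sup>2)" by (rule mult_left_mono) simp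
        then show ?thesis by (simp add: sum_distrib_left)
      qed
      ultimately show ?thesis using alpha_pos
        by (intro add_mono mult_left_mono) (auto intro!: divide_nonneg_pos)
    qed
    finally show ?thesis unfolding S_def .
  qed
  have "\<forall>K::nat. K \<ge> 1 \<longrightarrow>
     Min ((\<lambda>k. \<integral>\<^sup>+ \<omega>. ennreal (f (X k \<omega>) + h (X k \<omega>) - phis) \<partial>M) ` {..<K}) \<le> ennreal (C / real K)"
  proof (intro allI impI)
    fix K :: nat assume K: "K \<ge> 1"
    define v where "v = (\<lambda>k. \<integral>\<^sup>+ \<omega>. ennreal (f (X k \<omega>) + h (X k \<omega>) - phis) \<partial>M)"
    have fin: "finite (v ` {..<K})" by simp
    have "Min (v ` {..<K}) \<le> ennreal (C / real K)"
    proof (cases "K = 1")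
      case True
      have "Min (v ` {..<K}) \<le> v 0" using K by (intro Min_le fin) auto
      also have "v 0 = ennreal (f x0 + h x0 - phis)"
        unfolding v_def by (simp add: X0 prob_space.emeasure_space_1[OF M_prob])
      also have "\<dots> \<le> ennreal (C / real K)" unfolding True C_def c0_def using S0 by (intro ennreal_leI) auto
      finally show ?thesis .
    next
      case False
      then have K2: "K \<ge> 2" using K by simp
      obtain j where j: "j < K - 1" "d j \<le> S / (real K - 1)"
      proof (rule ccontr)
        assume "\<not> ?thesis"
        then have gt: "\<And>j. j < K - 1 \<Longrightarrow> d j > S / (real K - 1)" by (meson not_le that)
        have "(\<Sum>j<K - 1. S / (real K - 1)) < (\<Sum>j<K - 1. d j)"
        proof (rule sum_strict_mono)
          show "{..<K - 1} \<noteq> {}" using K2 by (simp add: lessThan_empty_iff)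
        qed (auto intro: gt)
        also have "\<dots> \<le> S" by (rule sumd)
        finally show False using K2 by (simp add: of_nat_diff)
      qed
      have "Min (v ` {..<K}) \<le> v (Suc j)" using j by (intro Min_le fin) auto
      also have "v (Suc j) = ennreal (d j)" unfolding v_def d_def by (rule nn_phi_eq)
      also have "\<dots> \<le> ennreal (C / real K)"
      proof (rule ennreal_leI)
        have "S / (real K - 1) \<le> 2 * S / real K"
          using K2 S0 mult_left_mono[of 2 "real K" S] by (simp add: field_simps)
        also have "\<dots> \<le> C / real K" unfolding C_def c0_def using K2 by (simp add: divide_right_mono)
        finally show "d j \<le> C / real K" using j by simp
      qed
      finally show ?thesis .
    qed
    then show "Min ((\<lambda>k. \<integral>\<^sup>+ \<omega>. ennreal (f (X k \<omega>) + h (X k \<omega>) - phis) \<partial>M) ` {..<K}) \<le> ennreal (C / real K)"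
      unfolding v_def .
  qed
  then show ?thesis by blast
qed

end


context apg
begin

abbreviation "th k \<equiv> theta_acc k"

definition V :: "nat \<Rightarrow> 'w \<Rightarrow> 'a" where
  "V k \<omega> = (if k = 0 then x0 else X (k - 1) \<omega> + (1 / th k) *\<^sub>R (X k \<omega> - X (k - 1) \<omega>))"

definition U :: "nat \<Rightarrow> 'w \<Rightarrow> 'a" where
  "U k \<omega> = (1 - th (Suc k)) *\<^sub>R X k \<omega> + th (Suc k) *\<^sub>R xstar"

lemma th_pos: "th k > 0" unfolding theta_acc_def by simp

lemma th1: "th (Suc 0) = 1" unfolding theta_acc_def by simp

lemma th_le1: "th (Suc k) \<le> 1" unfolding theta_acc_def by simp

lemma I2: "X (Suc k) \<omega> - U k \<omega> = th (Suc k) *\<^sub>R (V (Suc k) \<omega> - xstar)"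
proof -
  have "th (Suc k) *\<^sub>R (V (Suc k) \<omega> - xstar)
      = th (Suc k) *\<^sub>R X k \<omega> + (th (Suc k) * (1 / th (Suc k))) *\<^sub>R (X (Suc k) \<omega> - X k \<omega>) - th (Suc k) *\<^sub>R xstar"
    unfolding V_def by (simp add: algebra_simps)
  also have "th (Suc k) * (1 / th (Suc k)) = 1" using th_pos[of "Suc k"] by simp
  finally show ?thesis unfolding U_def by (simp add: algebra_simps)
qed

lemma I1:
  assumes bb: "\<And>k. b k = beta_acc k"
  shows "Y k \<omega> - U k \<omega> = th (Suc k) *\<^sub>R (V k \<omega> - xstar)"
proof (cases k)
  case 0
  then show ?thesis unfolding U_def V_def by (simp add: th1 X0 Y0)
next
  case (Suc j)
  define t' where "t' = th (Suc (Suc j))"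
  define t where "t = th (Suc j)"
  define \<beta> where "\<beta> = beta_acc (Suc j)"
  define Dv where "Dv = X (Suc j) \<omega> - X j \<omega>"
  have tv: "t = 2 / (real j + 2)" unfolding t_def theta_acc_def by simp
  have t'v: "t' = 2 / (real j + 3)" unfolding t'_def theta_acc_def by simp
  have bv: "\<beta> = real j / (real j + 3)" unfolding \<beta>_def beta_acc_def by simp
  have k1: "t' + \<beta> = (real j + 2) / (real j + 3)" unfolding t'v bv by (simp add: divide_simps) (simp add: algebra_simps)
  have k2: "t' * (1 / t) = (real j + 2) / (real j + 3)" unfolding t'v tv by (simp add: divide_simps) (simp add: algebra_simps)
  have key: "t' + \<beta> = t' * (1 / t)" using k1 k2 by simp
  have "Y (Suc j) \<omega> - U (Suc j) \<omega> = t' *\<^sub>R X (Suc j) \<omega> + \<beta> *\<^sub>R Dv - t' *\<^sub>R xstar"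
    unfolding U_def YSuc bb t'_def \<beta>_def Dv_def by (simp add: algebra_simps)
  also have "\<dots> = t' *\<^sub>R X j \<omega> + (t' + \<beta>) *\<^sub>R Dv - t' *\<^sub>R xstar"
    unfolding Dv_def by (simp add: algebra_simps)
  also have "\<dots> = t' *\<^sub>R X j \<omega> + (t' * (1 / t)) *\<^sub>R Dv - t' *\<^sub>R xstar" unfolding key ..
  also have "\<dots> = t' *\<^sub>R (V (Suc j) \<omega> - xstar)"
    unfolding V_def t_def Dv_def by (simp add: algebra_simps)
  finally show ?thesis unfolding Suc t'_def .
qed

lemma U_F: "U k \<in> borel_measurable (Fk k)"
  unfolding U_def[abs_def] using X_F[of k] by measurable

lemma U_sq: "sqi M (U k)"
  unfolding U_def[abs_def]
  by (intro prob_space.sqi_add[OF M_prob] prob_space.sqi_scale[OF M_prob] X_sq prob_space.sqi_const[OF M_prob])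

lemma V_sq: "sqi M (V k)"
proof (cases k)
  case 0
  then show ?thesis unfolding V_def[abs_def] by (simp add: prob_space.sqi_const[OF M_prob])
next
  case (Suc j)
  have "sqi M (\<lambda>\<omega>. X j \<omega> + (1 / th (Suc j)) *\<^sub>R (X (Suc j) \<omega> - X j \<omega>))"
    by (intro prob_space.sqi_add[OF M_prob] prob_space.sqi_scale[OF M_prob] prob_space.sqi_diff[OF M_prob] X_sq)
  then show ?thesis unfolding V_def[abs_def] Suc by simp
qed

lemma U_D: "U k \<omega> \<in> D"
proof (cases k)
  case 0
  then show ?thesis unfolding U_def using th1 xs_dom by simp
next
  case (Suc j)
  have "(1 - th (Suc k)) *\<^sub>R X k \<omega> + th (Suc k) *\<^sub>R xstar \<in> D"
    using D_convex X_D[of j \<omega>] xs_dom th_pos[of "Suc k"] th_le1[of k] unfolding Suc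
    by (simp add: convex_alt)
  then show ?thesis unfolding U_def .
qed

definition Phi :: "nat \<Rightarrow> 'w \<Rightarrow> real" where
  "Phi k \<omega> = (if k = 0 then phis else (1 - th (Suc k)) * (f (X k \<omega>) + h (X k \<omega>)) + th (Suc k) * phis)"

lemma Phi_ge: "f (U k \<omega>) + h (U k \<omega>) \<le> Phi k \<omega>"
proof (cases k)
  case 0
  then show ?thesis unfolding U_def Phi_def using th1 by simp
next
  case (Suc j)
  have t: "0 \<le> th (Suc k)" "th (Suc k) \<le> 1" using th_pos[of "Suc k"] th_le1[of k] by auto
  have "f (U k \<omega>) \<le> (1 - th (Suc k)) * f (X k \<omega>) + th (Suc k) * f xstar"
    unfolding U_def using convex_onD[OF cvx, of "th (Suc k)" "X k \<omega>" xstar] t by simp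
  moreover have "h (U k \<omega>) \<le> (1 - th (Suc k)) * h (X k \<omega>) + th (Suc k) * h xstar"
    unfolding U_def using convex_onD[OF h_convex, of "th (Suc k)" "X k \<omega>" xstar] t X_D[of j \<omega>] xs_dom
    unfolding Suc by simp
  ultimately show ?thesis unfolding Phi_def using Suc by (simp add: algebra_simps)
qed

lemma Phi_int: "integrable M (Phi k)"
proof (cases k)
  case 0
  then show ?thesis unfolding Phi_def[abs_def] by simp
next
  case (Suc j)
  then show ?thesis unfolding Phi_def[abs_def] using phi_int[of j] by simp
qed

lemma Phi_integral: "(\<integral>\<omega>. Phi k \<omega> \<partial>M) = (if k = 0 then phis else (1 - th (Suc k)) * (\<integral>\<omega>. f (X k \<omega>) + h (X k \<omega>) \<partial>M) + th (Suc k) * phis)"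
proof (cases k)
  case 0
  then show ?thesis unfolding Phi_def by (simp add: int_const_M)
next
  case (Suc j)
  then show ?thesis unfolding Phi_def using phi_int[of j] by (simp add: int_const_M)
qed

end


context apg
begin

definition Dk :: "nat \<Rightarrow> real" where "Dk j = (\<integral>\<omega>. f (X j \<omega>) + h (X j \<omega>) \<partial>M) - phis"
definition wv :: "nat \<Rightarrow> real" where "wv j = (\<integral>\<omega>. (norm (V j \<omega> - xstar))\<^sup>2 \<partial>M)"

lemma wv_nonneg: "wv j \<ge> 0" unfolding wv_def by (rule integral_nonneg_AE) simp

lemma Dk_nonneg: "Dk (Suc j) \<ge> 0" unfolding Dk_def using Ephi_ge[of j] by simp

lemma coef: "(1 - th (Suc (Suc j))) / (th (Suc (Suc j)))\<^sup>2 \<le> 1 / (th (Suc j))\<^sup>2"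
proof -
  have a: "(1 - th (Suc (Suc j))) / (th (Suc (Suc j)))\<^sup>2 = (real j + 1) * (real j + 3) / 4"
    unfolding theta_acc_def by (simp add: divide_simps power2_eq_square) (simp add: algebra_simps)
  have b: "1 / (th (Suc j))\<^sup>2 = (real j + 2)\<^sup>2 / 4"
    unfolding theta_acc_def by (simp add: divide_simps power2_eq_square) (simp add: algebra_simps)
  show ?thesis unfolding a b by (simp add: power2_eq_square algebra_simps)
qed

lemma acc_step:
  assumes bb: "\<And>k. b k = beta_acc k"
  shows "Dk (Suc k) / (th (Suc k))\<^sup>2 + wv (Suc k) / (2 * \<alpha>)
    \<le> (if k = 0 then 0 else Dk k / (th k)\<^sup>2) + wv k / (2 * \<alpha>) + \<alpha> * (\<iota>0\<^sup>2 * (\<delta> k)\<^sup>2) / (th (Suc k))\<^sup>2"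
proof -
  define t where "t = th (Suc k)"
  have t0: "t > 0" unfolding t_def by (rule th_pos)
  define c where "c = \<iota>0\<^sup>2 * (\<delta> k)\<^sup>2"
  have se: "(\<integral>\<omega>. f (X (Suc k) \<omega>) + h (X (Suc k) \<omega>) \<partial>M)
    \<le> (\<integral>\<omega>. Phi k \<omega> \<partial>M) + ((\<integral>\<omega>. (norm (Y k \<omega> - U k \<omega>))\<^sup>2 \<partial>M) - (\<integral>\<omega>. (norm (X (Suc k) \<omega> - U k \<omega>))\<^sup>2 \<partial>M)) / (2 * \<alpha>)
       + \<alpha> * c"
    unfolding c_def by (rule step_exp[OF U_F U_sq U_D Phi_int Phi_ge])
  have n1: "(\<integral>\<omega>. (norm (Y k \<omega> - U k \<omega>))\<^sup>2 \<partial>M) = t\<^sup>2 * wv k"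
    unfolding I1[OF bb] wv_def t_def using th_pos[of "Suc k"] by (simp add: power_mult_distrib)
  have n2: "(\<integral>\<omega>. (norm (X (Suc k) \<omega> - U k \<omega>))\<^sup>2 \<partial>M) = t\<^sup>2 * wv (Suc k)"
    unfolding I2 wv_def t_def using th_pos[of "Suc k"] by (simp add: power_mult_distrib)
  define P where "P = (if k = 0 then 0 else (1 - t) * Dk k)"
  have ph: "(\<integral>\<omega>. Phi k \<omega> \<partial>M) = P + phis"
    unfolding Phi_integral P_def Dk_def t_def by (simp add: algebra_simps)
  have A: "Dk (Suc k) \<le> P + t\<^sup>2 * (wv k - wv (Suc k)) / (2 * \<alpha>) + \<alpha> * c"
    using se unfolding n1 n2 ph Dk_def by (simp add: right_diff_distrib)
  have t2: "t\<^sup>2 > 0" using t0 by simp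
  have "Dk (Suc k) / t\<^sup>2 \<le> (P + t\<^sup>2 * (wv k - wv (Suc k)) / (2 * \<alpha>) + \<alpha> * c) / t\<^sup>2"
    using A t2 by (rule divide_right_mono[OF _ less_imp_le])
  also have "\<dots> = P / t\<^sup>2 + (wv k - wv (Suc k)) / (2 * \<alpha>) + \<alpha> * c / t\<^sup>2"
    using t2 by (simp add: add_divide_distrib)
  finally have B: "Dk (Suc k) / t\<^sup>2 \<le> P / t\<^sup>2 + (wv k - wv (Suc k)) / (2 * \<alpha>) + \<alpha> * c / t\<^sup>2" .
  have C: "P / t\<^sup>2 \<le> (if k = 0 then 0 else Dk k / (th k)\<^sup>2)"
  proof (cases k)
    case 0
    then show ?thesis unfolding P_def by simp
  next
    case (Suc j)
    have "P / t\<^sup>2 = (1 - t) / t\<^sup>2 * Dk k" unfolding P_def using Suc by simp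
    also have "\<dots> \<le> 1 / (th k)\<^sup>2 * Dk k"
      using coef[of j] Dk_nonneg[of j] unfolding t_def Suc by (intro mult_right_mono) auto
    finally show ?thesis using Suc by simp
  qed
  show ?thesis using B C unfolding t_def[symmetric] c_def by (simp add: diff_divide_distrib)
qed

lemma optII:
  assumes bb: "\<And>k. b k = beta_acc k" and sm: "summable (\<lambda>k. (\<delta> k)\<^sup>2 / (theta_acc (Suc k))\<^sup>2)"
  shows "\<exists>C::real. \<forall>K::nat. K \<ge> 1 \<longrightarrow>
     (\<integral>\<^sup>+ \<omega>. ennreal (f (X K \<omega>) + h (X K \<omega>) - phis) \<partial>M) \<le> ennreal (C / (real K)\<^sup>2)"
proof -
  define E where "E k = (if k = 0 then 0 else Dk k / (th k)\<^sup>2) + wv k / (2 * \<alpha>)" for k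
  define q where "q k = (\<delta> k)\<^sup>2 / (theta_acc (Suc k))\<^sup>2" for k
  define S where "S = (norm (x0 - xstar))\<^sup>2 / (2 * \<alpha>) + \<alpha> * \<iota>0\<^sup>2 * (\<Sum>k. q k)"
  have q0: "q k \<ge> 0" for k unfolding q_def by simp
  have smq: "summable q" using sm unfolding q_def .
  have Es: "E (Suc k) \<le> E k + \<alpha> * \<iota>0\<^sup>2 * q k" for k
    using acc_step[OF bb, of k] unfolding E_def q_def by (simp add: algebra_simps)
  have E0: "E 0 = (norm (x0 - xstar))\<^sup>2 / (2 * \<alpha>)"
    unfolding E_def wv_def V_def by (simp add: int_const_M)
  have EK: "E K \<le> E 0 + \<alpha> * \<iota>0\<^sup>2 * (\<Sum>k<K. q k)" for K
  proof (induction K)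
    case 0 then show ?case by simp
  next
    case (Suc K) then show ?case using Es[of K] by (simp add: distrib_left)
  qed
  have ES: "E K \<le> S" for K
  proof -
    have "(\<Sum>k<K. q k) \<le> (\<Sum>k. q k)" by (rule sum_le_suminf[OF smq]) (use q0 in auto)
    then have "\<alpha> * \<iota>0\<^sup>2 * (\<Sum>k<K. q k) \<le> \<alpha> * \<iota>0\<^sup>2 * (\<Sum>k. q k)"
      using alpha_pos by (intro mult_left_mono) auto
    then show ?thesis using EK[of K] E0 unfolding S_def by linarith
  qed
  have "\<forall>K::nat. K \<ge> 1 \<longrightarrow> (\<integral>\<^sup>+ \<omega>. ennreal (f (X K \<omega>) + h (X K \<omega>) - phis) \<partial>M) \<le> ennreal (4 * S / (real K)\<^sup>2)"
  proof (intro allI impI)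
    fix K :: nat assume K: "K \<ge> 1"
    then obtain j where j: "K = Suc j" by (cases K) auto
    have "Dk K / (th K)\<^sup>2 \<le> E K" unfolding E_def using K wv_nonneg[of K] alpha_pos by simp
    also have "\<dots> \<le> S" by (rule ES)
    finally have d1: "Dk K / (th K)\<^sup>2 \<le> S" .
    have thK: "(th K)\<^sup>2 = 4 / (real K + 1)\<^sup>2" unfolding theta_acc_def by (simp add: power_divide)
    have "Dk K \<le> S * (th K)\<^sup>2" using d1 th_pos[of K] by (simp add: divide_le_eq)
    also have "\<dots> = 4 * S / (real K + 1)\<^sup>2" unfolding thK by simp
    also have "\<dots> \<le> 4 * S / (real K)\<^sup>2"
    proof -
      have S0: "S \<ge> 0" using ES[of 0] E0 alpha_pos by (metis divide_nonneg_pos zero_le_power2 zero_less_mult_iff zero_less_numeral order_trans)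
      have "(real K)\<^sup>2 \<le> (real K + 1)\<^sup>2" by (intro power_mono) auto
      moreover have "(real K)\<^sup>2 > 0" using K by simp
      ultimately show ?thesis using S0 by (intro divide_left_mono) auto
    qed
    finally have dK: "Dk K \<le> 4 * S / (real K)\<^sup>2" .
    have "(\<integral>\<^sup>+ \<omega>. ennreal (f (X K \<omega>) + h (X K \<omega>) - phis) \<partial>M) = ennreal (Dk K)"
      unfolding j Dk_def by (rule nn_phi_eq)
    also have "\<dots> \<le> ennreal (4 * S / (real K)\<^sup>2)" using dK by (rule ennreal_leI)
    finally show "(\<integral>\<^sup>+ \<omega>. ennreal (f (X K \<omega>) + h (X K \<omega>) - phis) \<partial>M) \<le> ennreal (4 * S / (real K)\<^sup>2)" .
  qed
  then show ?thesis by blast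
qed

end


theorem mainTheorem11:
  fixes f :: "'a::euclidean_space \<Rightarrow> real" and gradf :: "'a \<Rightarrow> 'a" and L :: real
    and h :: "'a \<Rightarrow> real" and D :: "'a set"
    and F :: "'a \<Rightarrow> 'b \<Rightarrow> real" and P :: "'b measure"
    and M :: "'w measure" and g :: "nat \<Rightarrow> 'w \<Rightarrow> 'a"
    and x0 xstar :: 'a and \<alpha> \<eta> \<iota>0 :: real and \<delta> :: "nat \<Rightarrow> real"
  assumes L_pos: "L > 0"
    and f_convex: "convex_on UNIV f"
    and f_grad: "\<And>x. (f has_derivative (\<lambda>v. gradf x \<bullet> v)) (at x)"
    and grad_cont: "continuous_on UNIV gradf"
    and grad_lip: "\<And>x y. norm (gradf x - gradf y) \<le> L * norm (x - y)"
    and h_ccp: "closed_convex_proper h D"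
    and EX_P: "prob_space P"
    and EX_int: "\<And>x. integrable P (F x)"
    and EX_f: "\<And>x. f x = (\<integral>\<xi>. F x \<xi> \<partial>P)"
    and xstar_dom: "xstar \<in> D"
    and xstar_min: "\<And>x. x \<in> D \<Longrightarrow> f xstar + h xstar \<le> f x + h x"
    and M_prob: "prob_space M"
    and g_meas: "\<And>k. g k \<in> borel_measurable M"
    and g_int: "\<And>k. integrable M (g k)"
    and eta: "0 \<le> \<eta>" "\<eta> < 1"
    and iota: "0 \<le> \<iota>0" "\<iota>0\<^sup>2 < 1 - \<eta>"
    and delta_nonneg: "\<And>k. \<delta> k \<ge> 0"
    and alpha_pos: "\<alpha> > 0"
    and alpha_le: "\<alpha> \<le> (1 - \<eta> - \<iota>0\<^sup>2) / L"
  shows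
    "(unbiased M gradf h D (\<lambda>_. \<alpha>) (\<lambda>_. 0) x0 g
      \<and> condC M gradf h D (\<lambda>_. \<alpha>) (\<lambda>_. 0) x0 g (\<lambda>_. \<eta>) \<iota>0 \<delta>
      \<and> summable (\<lambda>k. (\<delta> k)\<^sup>2)
      \<longrightarrow> (\<exists>C::real. \<forall>K::nat. K \<ge> 1 \<longrightarrow>
            Min ((\<lambda>k. \<integral>\<^sup>+ \<omega>. ennreal (f (xit h D (\<lambda>_. \<alpha>) (\<lambda>_. 0) x0 g k \<omega>)
                      + h (xit h D (\<lambda>_. \<alpha>) (\<lambda>_. 0) x0 g k \<omega>) - (f xstar + h xstar)) \<partial>M) ` {..<K})
            \<le> ennreal (C / real K)))
   \<and> (unbiased M gradf h D (\<lambda>_. \<alpha>) beta_acc x0 g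
      \<and> condC M gradf h D (\<lambda>_. \<alpha>) beta_acc x0 g (\<lambda>_. \<eta>) \<iota>0 \<delta>
      \<and> summable (\<lambda>k. (\<delta> k)\<^sup>2 / (theta_acc (Suc k))\<^sup>2)
      \<longrightarrow> (\<exists>C::real. \<forall>K::nat. K \<ge> 1 \<longrightarrow>
            (\<integral>\<^sup>+ \<omega>. ennreal (f (xit h D (\<lambda>_. \<alpha>) beta_acc x0 g K \<omega>)
                      + h (xit h D (\<lambda>_. \<alpha>) beta_acc x0 g K \<omega>) - (f xstar + h xstar)) \<partial>M)
            \<le> ennreal (C / (real K)\<^sup>2)))"
proof -
  have pset: "prox_setting f gradf L h D xstar"
    by unfold_locales (use f_grad grad_lip L_pos h_ccp xstar_dom xstar_min in auto)
  have aL: "\<alpha> * L \<le> 1 - \<eta>"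
  proof -
    have "\<alpha> * L \<le> 1 - \<eta> - \<iota>0\<^sup>2" using alpha_le L_pos by (simp add: le_divide_eq)
    moreover have "\<iota>0\<^sup>2 \<ge> 0" by simp
    ultimately show ?thesis by linarith
  qed
  show ?thesis
  proof (intro conjI impI)
    assume H: "unbiased M gradf h D (\<lambda>_. \<alpha>) (\<lambda>_. 0) x0 g
      \<and> condC M gradf h D (\<lambda>_. \<alpha>) (\<lambda>_. 0) x0 g (\<lambda>_. \<eta>) \<iota>0 \<delta>
      \<and> summable (\<lambda>k. (\<delta> k)\<^sup>2)"
    interpret A: apg f gradf L h D xstar M g x0 \<alpha> \<eta> \<iota>0 \<delta> "\<lambda>_. 0"
      by (rule apg.intro[OF pset apg_axioms.intro[OF f_convex M_prob g_meas g_int eta(1) eta(2) alpha_pos aL conjunct1[OF H] conjunct1[OF conjunct2[OF H]]]])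
    show "\<exists>C::real. \<forall>K::nat. K \<ge> 1 \<longrightarrow>
            Min ((\<lambda>k. \<integral>\<^sup>+ \<omega>. ennreal (f (xit h D (\<lambda>_. \<alpha>) (\<lambda>_. 0) x0 g k \<omega>)
                      + h (xit h D (\<lambda>_. \<alpha>) (\<lambda>_. 0) x0 g k \<omega>) - (f xstar + h xstar)) \<partial>M) ` {..<K})
            \<le> ennreal (C / real K)"
      by (rule A.optI) (simp, rule conjunct2[OF conjunct2[OF H]])
  next
    assume H: "unbiased M gradf h D (\<lambda>_. \<alpha>) beta_acc x0 g
      \<and> condC M gradf h D (\<lambda>_. \<alpha>) beta_acc x0 g (\<lambda>_. \<eta>) \<iota>0 \<delta>
      \<and> summable (\<lambda>k. (\<delta> k)\<^sup>2 / (theta_acc (Suc k))\<^sup>2)"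
    interpret A: apg f gradf L h D xstar M g x0 \<alpha> \<eta> \<iota>0 \<delta> beta_acc
      by (rule apg.intro[OF pset apg_axioms.intro[OF f_convex M_prob g_meas g_int eta(1) eta(2) alpha_pos aL conjunct1[OF H] conjunct1[OF conjunct2[OF H]]]])
    show "\<exists>C::real. \<forall>K::nat. K \<ge> 1 \<longrightarrow>
            (\<integral>\<^sup>+ \<omega>. ennreal (f (xit h D (\<lambda>_. \<alpha>) beta_acc x0 g K \<omega>)
                      + h (xit h D (\<lambda>_. \<alpha>) beta_acc x0 g K \<omega>) - (f xstar + h xstar)) \<partial>M)
            \<le> ennreal (C / (real K)\<^sup>2)"
      by (rule A.optII) (simp, rule conjunct2[OF conjunct2[OF H]])
  qed
qed


end
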